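(* Let $C\subseteq[n]$, $A_C\subseteq C^2$ symmetric with no pair $(a,a)$, $B_C\subseteq([n]\setminus C)\times C$, $ComCh_C\subseteq([n]\setminus C)^2$ and $NoComCh_C\subseteq([n]\setminus C)^2$. Let $\tilde A_C\subseteq A_C$ contain exactly one of $(a,b),(b,a)$ for each $(a,b)\in A_C$, and $\tilde E_C=\tilde A_C\cup B_C$. Then there exists $E_C\subseteq[n]^2$ with the SCCR properties (below) and containing at most one of $(a,b),(b,a)$ for all $a,b\in[n]$ if and only if there exist a removable set $Y\subseteq\tilde E_C$ and a vertex $x$ of the polyhedron $\mathcal F(Y)\cap[-1,0]^{\tilde A_C\setminus Y}$ such that: (1) for all $(a,b,c)\in[n]^3$ with $c\in C$, $(a,b),(c,b)\in A_C\cup B_C$, $Y\cap\{(a,b),(b,a),(c,b),(b,c)\}=\emptyset$ and $(a,c)\notin A_C\cup B_C$: $w_{Y,(a,b,c)}^Tx<\max_{y\in\{-1,0\}^{\tilde A_C\setminus Y}}w_{Y,(a,b,c)}^Ty$; (2) for all $(a,c)\in Y$ there exists $b\in C$ with $(a,b),(c,b)\in A_C\cup B_C$ and $Y\cap\{(a,b),(b,a),(c,b),(b,c)\}=\emptyset$ such that $w_{Y,(a,b,c)}^Tx=\max_{y\in\{-1,0\}^{\tilde A_C\setminus Y}}w_{Y,(a,b,c)}^Ty$. Moreover, if such $Y$ and $x$ exist, then $\tilde E^{Y,J(x)}_C$ has the SCCR properties, where $J(x)=\{e\in\tilde A_C\setminus Y: x_e=-1\}$.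
   Context: A set $E_C\subseteq[n]^2$ has the SCCR properties (for the data $C,A_C,B_C,ComCh_C,NoComCh_C$) if, in the directed graph $G_C=([n],E_C)$: distinct $a,b$ are $p$-adjacent iff $(a,b)\in A_C\cup B_C$ or $(b,a)\in A_C\cup B_C$; $C$ is a strongly connected component of $G_C$ and there is no directed path from a vertex of $C$ to any vertex outside $C$; every $(a,b)\in ComCh_C$ has a common child in $C$; and no $(a,b)\in NoComCh_C$ has a common child in $C$. Here distinct $a,b$ are $p$-adjacent in a directed graph if there is an edge between them (either direction) or they have a common child that is an ancestor of $a$ or of $b$ ($u$ is an ancestor of $v$ if $u=v$ or there is a directed path from $u$ to $v$); strongly connected components are the classes of $i\sim j$ iff $i=j$ or there are directed paths $i\to j$ and $j\to i$. $Y\subseteq\tilde E_C$ is removable if: for every $(a,c)\in ComCh_C$ there is $b\in C$ with $(a,b),(c,b)\in B_C\setminus Y$; for every $(a,c)\in NoComCh_C$ there is no $b\in C$ with $(a,b),(c,b)\in B_C\setminus Y$; for every $(a,c)\in Y$ there is $b\in C$ with $(a,b),(c,b)\in A_C\cup B_C$ and $Y\cap\{(a,b),(b,a),(c,b),(b,c)\}=\emptyset$. For $E\subseteq[n]^2$, $U\subseteq[n]$: $\delta^-_E(U)=\{(a,b)\in E: a\notin U,b\in U\}$, $\delta^+_E(U)=\{(a,b)\in E: a\in U,b\notin U\}$, and $x(E')=\sum_{e\in E'}x_e$. $\mathcal F(Y)=\{x\in\mathbb R^{\tilde A_C\setminus Y}: x(\delta^-_{\tilde A_C\setminus Y}(U))-x(\delta^+_{\tilde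 A_C\setminus Y}(U))\le|\delta^+_{\tilde A_C\setminus Y}(U)|-1$ for all $U\in2^C\setminus\{\emptyset,C\}\}$. For $J\subseteq\tilde A_C\setminus Y$: $\tilde E^{Y,J}_C=(\{(b,a):(a,b)\in J\}\cup(\tilde A_C\setminus(Y\cup J)))\cup(B_C\setminus Y)$. For $(a,b,c)\in[n]^3$ with $c\in C$, $(a,b),(c,b)\in A_C\cup B_C$ and $Y\cap\{(a,b),(b,a),(c,b),(b,c)\}=\emptyset$, the weight vector $w_{Y,(a,b,c)}\in\mathbb R^{\tilde A_C\setminus Y}$ has entry $-1$ at $e=(b,a)$ or $e=(b,c)$, entry $1$ at $e=(a,b)$ or $e=(c,b)$, and $0$ elsewhere. *)

theory Defs
  imports Complex_Main
begin

type_synonym edge = "nat \<times> nat"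

definition ancestor :: "edge set \<Rightarrow> nat \<Rightarrow> nat \<Rightarrow> bool" where
  "ancestor E u v \<longleftrightarrow> (u, v) \<in> E\<^sup>*"

definition common_child :: "edge set \<Rightarrow> nat \<Rightarrow> nat \<Rightarrow> nat \<Rightarrow> bool" where
  "common_child E a b c \<longleftrightarrow> (a, c) \<in> E \<and> (b, c) \<in> E"

definition p_adjacent :: "edge set \<Rightarrow> nat \<Rightarrow> nat \<Rightarrow> bool" where
  "p_adjacent E a b \<longleftrightarrow> a \<noteq> b \<and>
     ((a, b) \<in> E \<or> (b, a) \<in> E \<or>
      (\<exists>c. common_child E a b c \<and> (ancestor E c a \<or> ancestor E c b)))"

definition is_SCC :: "nat \<Rightarrow> edge set \<Rightarrow> nat set \<Rightarrow> bool" where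
  "is_SCC n E C \<longleftrightarrow> (\<exists>i\<in>{1..n}. C = {j \<in> {1..n}. i = j \<or> ((i, j) \<in> E\<^sup>+ \<and> (j, i) \<in> E\<^sup>+)})"

definition SCCR :: "nat \<Rightarrow> nat set \<Rightarrow> edge set \<Rightarrow> edge set \<Rightarrow> edge set \<Rightarrow> edge set \<Rightarrow> edge set \<Rightarrow> bool" where
  "SCCR n C A B ComCh NoComCh E \<longleftrightarrow>
     (\<forall>a\<in>{1..n}. \<forall>b\<in>{1..n}. a \<noteq> b \<longrightarrow>
        (p_adjacent E a b \<longleftrightarrow> ((a, b) \<in> A \<union> B \<or> (b, a) \<in> A \<union> B))) \<and>
     is_SCC n E C \<and>
     (\<forall>i\<in>C. \<forall>j\<in>{1..n} - C. \<not> (i, j) \<in> E\<^sup>+) \<and>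
     (\<forall>(a, b)\<in>ComCh. \<exists>c\<in>C. common_child E a b c) \<and>
     (\<forall>(a, b)\<in>NoComCh. \<not> (\<exists>c\<in>C. common_child E a b c))"

definition removable :: "nat set \<Rightarrow> edge set \<Rightarrow> edge set \<Rightarrow> edge set \<Rightarrow> edge set \<Rightarrow> edge set \<Rightarrow> bool" where
  "removable C A B ComCh NoComCh Y \<longleftrightarrow>
     (\<forall>(a, c)\<in>ComCh. \<exists>b\<in>C. (a, b) \<in> B - Y \<and> (c, b) \<in> B - Y) \<and>
     (\<forall>(a, c)\<in>NoComCh. \<not> (\<exists>b\<in>C. (a, b) \<in> B - Y \<and> (c, b) \<in> B - Y)) \<and>
     (\<forall>(a, c)\<in>Y. \<exists>b\<in>C. (a, b) \<in> A \<union> B \<and> (c, b) \<in> A \<union> B \<and>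
         Y \<inter> {(a, b), (b, a), (c, b), (b, c)} = {})"

definition delta_in :: "edge set \<Rightarrow> nat set \<Rightarrow> edge set" where
  "delta_in E U = {(a, b) \<in> E. a \<notin> U \<and> b \<in> U}"

definition delta_out :: "edge set \<Rightarrow> nat set \<Rightarrow> edge set" where
  "delta_out E U = {(a, b) \<in> E. a \<in> U \<and> b \<notin> U}"

text \<open>Vectors in R^D (D a finite set of edges) are represented by functions
  edge => real vanishing outside D.\<close>
definition vecs_on :: "edge set \<Rightarrow> (edge \<Rightarrow> real) set" where
  "vecs_on D = {x. \<forall>e. e \<notin> D \<longrightarrow> x e = 0}"

definition xsum :: "(edge \<Rightarrow> real) \<Rightarrow> edge set \<Rightarrow> real" where
  "xsum x E' = (\<Sum>e\<in>E'. x e)"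

definition polyF_box :: "nat set \<Rightarrow> edge set \<Rightarrow> edge set \<Rightarrow> (edge \<Rightarrow> real) set" where
  "polyF_box C At Y =
     {x \<in> vecs_on (At - Y).
        (\<forall>U. U \<subseteq> C \<and> U \<noteq> {} \<and> U \<noteq> C \<longrightarrow>
           xsum x (delta_in (At - Y) U) - xsum x (delta_out (At - Y) U)
             \<le> real (card (delta_out (At - Y) U)) - 1) \<and>
        (\<forall>e\<in>At - Y. -1 \<le> x e \<and> x e \<le> 0)}"

definition is_vertex :: "(edge \<Rightarrow> real) set \<Rightarrow> (edge \<Rightarrow> real) \<Rightarrow> bool" where
  "is_vertex P x \<longleftrightarrow> x \<in> P \<and>
     \<not> (\<exists>y\<in>P. \<exists>z\<in>P. y \<noteq> z \<and> (\<exists>t::real. 0 < t \<and> t < 1 \<and>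
           x = (\<lambda>e. t * y e + (1 - t) * z e)))"

definition weight :: "nat \<Rightarrow> nat \<Rightarrow> nat \<Rightarrow> edge \<Rightarrow> real" where
  "weight a b c e =
     (if e = (b, a) \<or> e = (b, c) then -1 else if e = (a, b) \<or> e = (c, b) then 1 else 0)"

definition wdot :: "edge set \<Rightarrow> (edge \<Rightarrow> real) \<Rightarrow> (edge \<Rightarrow> real) \<Rightarrow> real" where
  "wdot D w x = (\<Sum>e\<in>D. w e * x e)"

definition pm_vecs :: "edge set \<Rightarrow> (edge \<Rightarrow> real) set" where
  "pm_vecs D = {y \<in> vecs_on D. \<forall>e\<in>D. y e \<in> {-1, 0}}"

definition wmax :: "edge set \<Rightarrow> (edge \<Rightarrow> real) \<Rightarrow> real" where
  "wmax D w = Max ((\<lambda>y. wdot D w y) ` pm_vecs D)"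

definition Etilde_YJ :: "edge set \<Rightarrow> edge set \<Rightarrow> edge set \<Rightarrow> edge set \<Rightarrow> edge set" where
  "Etilde_YJ At B Y J = ({(b, a). (a, b) \<in> J} \<union> (At - (Y \<union> J))) \<union> (B - Y)"

definition Jx :: "edge set \<Rightarrow> edge set \<Rightarrow> (edge \<Rightarrow> real) \<Rightarrow> edge set" where
  "Jx At Y x = {e \<in> At - Y. x e = -1}"

definition admissible :: "nat set \<Rightarrow> edge set \<Rightarrow> edge set \<Rightarrow> edge set \<Rightarrow> nat \<Rightarrow> nat \<Rightarrow> nat \<Rightarrow> bool" where
  "admissible C A B Y a b c \<longleftrightarrow> c \<in> C \<and> (a, b) \<in> A \<union> B \<and> (c, b) \<in> A \<union> B \<and>
      Y \<inter> {(a, b), (b, a), (c, b), (b, c)} = {}"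

end

theory Submission
  imports Defs "HOL-Library.FuncSet"
begin



definition crossc :: "(nat \<Rightarrow> 'c) \<Rightarrow> 'c \<Rightarrow> edge \<Rightarrow> bool" where
  "crossc k c e \<longleftrightarrow> (k (fst e) = c) \<noteq> (k (snd e) = c)"

definition divc :: "(nat \<Rightarrow> 'c) \<Rightarrow> edge set \<Rightarrow> (edge \<Rightarrow> real) \<Rightarrow> 'c \<Rightarrow> real" where
  "divc k F d c = (\<Sum>e\<in>F. d e * ((if k (snd e) = c then 1 else 0) - (if k (fst e) = c then 1 else 0)))"

lemma circ_exists:
  assumes "finite F" "F \<noteq> {}" "\<forall>c. card {e\<in>F. crossc k c e} \<noteq> 1"
  shows "\<exists>d. (\<forall>e. e \<notin> F \<longrightarrow> d e = 0) \<and> (\<exists>e\<in>F. d e \<noteq> 0) \<and> (\<forall>c. divc k F d c = 0)"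
  using assms
proof (induction "card F" arbitrary: F k rule: less_induct)
  case less
  show ?case
  proof (cases "\<exists>e\<in>F. k (fst e) = k (snd e)")
    case True
    then obtain e where e: "e \<in> F" "k (fst e) = k (snd e)" by blast
    define d where "d = (\<lambda>e'. if e' = e then (1::real) else 0)"
    have "divc k F d c = 0" for c
    proof -
      have "divc k F d c = (\<Sum>e'\<in>F. if e' = e then ((if k (snd e) = c then 1 else 0) - (if k (fst e) = c then 1 else 0)) else 0)"
        unfolding divc_def d_def by (rule sum.cong) auto
      also have "\<dots> = 0" using e by (simp add: sum.delta[OF less.prems(1)])
      finally show ?thesis .
    qed
    then show ?thesis using e by (intro exI[of _ d]) (auto simp: d_def)
  next
    case noloop: False
    obtain e where e: "e \<in> F" using less.prems(2) by blast
    obtain a b where ab: "e = (a,b)" by force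
    have kab: "k a \<noteq> k b" using noloop e ab by auto
    show ?thesis
    proof (cases "\<exists>e'\<in>F - {e}. (k (fst e') = k a \<and> k (snd e') = k b) \<or> (k (fst e') = k b \<and> k (snd e') = k a)")
      case True
      then obtain e' where e': "e' \<in> F" "e' \<noteq> e"
        "(k (fst e') = k a \<and> k (snd e') = k b) \<or> (k (fst e') = k b \<and> k (snd e') = k a)" by blast
      define s where "s = (if k (fst e') = k a then (-1::real) else 1)"
      define d where "d = (\<lambda>x. if x = e then 1 else if x = e' then s else (0::real))"
      have "divc k F d c = 0" for c
      proof -
        have "divc k F d c = (\<Sum>x\<in>F. (if x = e then ((if k b = c then 1 else 0) - (if k a = c then 1 else 0)) else 0)
            + (if x = e' then s * ((if k (snd e') = c then 1 else 0) - (if k (fst e') = c then 1 else 0)) else 0))"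
          unfolding divc_def d_def by (rule sum.cong) (use e' ab in auto)
        also have "\<dots> = ((if k b = c then 1 else 0) - (if k a = c then 1 else 0))
            + s * ((if k (snd e') = c then 1 else 0) - (if k (fst e') = c then 1 else 0))"
          using e e' by (simp add: sum.distrib sum.delta[OF less.prems(1)])
        also have "\<dots> = 0" using e'(3) kab by (auto simp: s_def)
        finally show ?thesis .
      qed
      moreover have "\<exists>x\<in>F. d x \<noteq> 0" using e by (intro bexI[of _ e]) (auto simp: d_def)
      moreover have "\<forall>x. x \<notin> F \<longrightarrow> d x = 0" using e e' by (auto simp: d_def)
      ultimately show ?thesis by blast
    next
      case noAB: False
      define k' where "k' = (\<lambda>v. if k v = k b then k a else k v)"
      define F' where "F' = F - {e}"
      have cA: "crossc k (k a) e" "crossc k (k b) e" using ab kab by (auto simp: crossc_def)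
      have degA: "card {x\<in>F. crossc k (k a) x} \<ge> 2"
      proof -
        have "{x\<in>F. crossc k (k a) x} \<noteq> {}" using cA e by blast
        then have "card {x\<in>F. crossc k (k a) x} \<noteq> 0" using less.prems(1) by simp
        moreover have "card {x\<in>F. crossc k (k a) x} \<noteq> 1" using less.prems(3) by blast
        ultimately show ?thesis by linarith
      qed
      have degB: "card {x\<in>F. crossc k (k b) x} \<ge> 2"
      proof -
        have "{x\<in>F. crossc k (k b) x} \<noteq> {}" using cA e by blast
        then have "card {x\<in>F. crossc k (k b) x} \<noteq> 0" using less.prems(1) by simp
        moreover have "card {x\<in>F. crossc k (k b) x} \<noteq> 1" using less.prems(3) by blast
        ultimately show ?thesis by linarith
      qed
      have fin': "finite F'" using less.prems(1) by (simp add: F'_def)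
      have ne': "F' \<noteq> {}"
      proof
        assume "F' = {}"
        then have "F \<subseteq> {e}" by (auto simp: F'_def)
        then have "{x\<in>F. crossc k (k a) x} \<subseteq> {e}" by auto
        then have "card {x\<in>F. crossc k (k a) x} \<le> card {e}" by (intro card_mono) auto
        then have "card {x\<in>F. crossc k (k a) x} \<le> 1" by simp
        with degA show False by simp
      qed
      have deg': "card {x\<in>F'. crossc k' c x} \<noteq> 1" for c
      proof (cases "c = k a")
        case True
        have nab: "\<not>((k (fst x) = k a \<and> k (snd x) = k b) \<or> (k (fst x) = k b \<and> k (snd x) = k a))" if "x \<in> F'" for x
          using noAB that by (auto simp: F'_def)
        have nl: "k (fst x) \<noteq> k (snd x)" if "x \<in> F" for x using noloop that by auto
        have eq: "{x\<in>F'. crossc k' c x} = ({x\<in>F. crossc k (k a) x} - {e}) \<union> ({x\<in>F. crossc k (k b) x} - {e})"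
        proof (rule set_eqI)
          fix x
          show "x \<in> {x\<in>F'. crossc k' c x} \<longleftrightarrow> x \<in> ({x\<in>F. crossc k (k a) x} - {e}) \<union> ({x\<in>F. crossc k (k b) x} - {e})"
          proof (cases "x \<in> F'")
            case True
            then have "x \<in> F" "x \<noteq> e" by (auto simp: F'_def)
            then show ?thesis using nab[OF True] nl[of x] True kab unfolding crossc_def k'_def \<open>c = k a\<close> by auto
          qed (auto simp: F'_def)
        qed
        have disj: "({x\<in>F. crossc k (k a) x} - {e}) \<inter> ({x\<in>F. crossc k (k b) x} - {e}) = {}"
        proof -
          have "\<not> (crossc k (k a) x \<and> crossc k (k b) x)" if "x \<in> F" "x \<noteq> e" for x
            using nab[of x] nl[of x] that kab unfolding crossc_def F'_def by auto
          then show ?thesis by blast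
        qed
        have "card {x\<in>F'. crossc k' c x} = card ({x\<in>F. crossc k (k a) x} - {e}) + card ({x\<in>F. crossc k (k b) x} - {e})"
          unfolding eq by (rule card_Un_disjoint) (use less.prems(1) disj in auto)
        also have "\<dots> = (card {x\<in>F. crossc k (k a) x} - 1) + (card {x\<in>F. crossc k (k b) x} - 1)"
          using cA e less.prems(1) by (simp add: card_Diff_singleton)
        finally show ?thesis using degA degB by linarith
      next
        case False
        show ?thesis
        proof (cases "c = k b")
          case True
          have "{x\<in>F'. crossc k' c x} = {}" using True kab unfolding crossc_def k'_def by auto
          then show ?thesis by (metis card.empty zero_neq_one)
        next
          case False2: False
          have "{x\<in>F'. crossc k' c x} = {x\<in>F. crossc k c x}"
            using False False2 ab unfolding crossc_def k'_def F'_def by auto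
          then show ?thesis using less.prems(3) by simp
        qed
      qed
      have lt: "card F' < card F" unfolding F'_def by (rule card_Diff1_less[OF less.prems(1) e])
      obtain d' where d': "\<forall>x. x \<notin> F' \<longrightarrow> d' x = 0" "\<exists>x\<in>F'. d' x \<noteq> 0" "\<forall>c. divc k' F' d' c = 0"
        using less.hyps[OF lt fin' ne'] deg' by blast
      define t where "t = divc k F' d' (k a)"
      define d where "d = d'(e := t)"
      have split: "divc k F d c = divc k F' d' c + t * ((if k b = c then 1 else 0) - (if k a = c then 1 else 0))" for c
      proof -
        have "divc k F d c = d e * ((if k (snd e) = c then 1 else 0) - (if k (fst e) = c then 1 else 0)) + divc k F' d c"
          unfolding divc_def F'_def using e less.prems(1) by (simp add: sum.remove)
        moreover have "divc k F' d c = divc k F' d' c" unfolding divc_def d_def F'_def by (rule sum.cong) auto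
        ultimately show ?thesis by (simp add: d_def ab algebra_simps)
      qed
      have kA: "divc k' F' d' (k a) = divc k F' d' (k a) + divc k F' d' (k b)"
        unfolding divc_def sum.distrib[symmetric]
        by (rule sum.cong) (use kab in \<open>auto simp: k'_def algebra_simps\<close>)
      have kO: "divc k' F' d' c = divc k F' d' c" if "c \<noteq> k a" "c \<noteq> k b" for c
        unfolding divc_def
        by (rule sum.cong) (use that in \<open>auto simp: k'_def\<close>)
      have "divc k F d c = 0" for c
      proof -
        consider "c = k a" | "c = k b" | "c \<noteq> k a" "c \<noteq> k b" by blast
        then show ?thesis
        proof cases
          case 1 then show ?thesis using split[of c] kab by (simp add: t_def)
        next
          case 2 then show ?thesis using split[of c] kab kA d'(3) by (simp add: t_def)
        next
          case 3 then show ?thesis using split[of c] kO[OF 3] d'(3) by simp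
        qed
      qed
      moreover have "\<forall>x. x \<notin> F \<longrightarrow> d x = 0" using d'(1) e by (auto simp: d_def F'_def)
      moreover have "\<exists>x\<in>F. d x \<noteq> 0" using d'(2) by (auto simp: d_def F'_def)
      ultimately show ?thesis by blast
    qed
  qed
qed




definition fo :: "(edge \<Rightarrow> real) \<Rightarrow> nat set \<Rightarrow> edge \<Rightarrow> real" where
  "fo x U e = (if fst e \<in> U \<and> snd e \<notin> U then 1 + x e else 0) + (if snd e \<in> U \<and> fst e \<notin> U then - x e else 0)"

definition outw :: "edge set \<Rightarrow> (edge \<Rightarrow> real) \<Rightarrow> nat set \<Rightarrow> real" where
  "outw D x U = (\<Sum>e\<in>D. fo x U e)"

locale pctx =
  fixes C :: "nat set" and D :: "edge set" and x :: "edge \<Rightarrow> real"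
  assumes finC: "finite C" and DC: "D \<subseteq> C \<times> C"
    and box: "\<forall>e\<in>D. -1 \<le> x e \<and> x e \<le> 0"
    and cut: "\<forall>U. U \<subseteq> C \<and> U \<noteq> {} \<and> U \<noteq> C \<longrightarrow> 1 \<le> outw D x U"
begin

lemma finD: "finite D" using finC DC by (meson finite_SigmaI finite_subset)

lemma submod: "outw D x (X \<inter> Y) + outw D x (X \<union> Y) \<le> outw D x X + outw D x Y"
proof -
  have "fo x (X \<inter> Y) e + fo x (X \<union> Y) e \<le> fo x X e + fo x Y e" if "e \<in> D" for e
  proof -
    have b: "-1 \<le> x e" "x e \<le> 0" using box that by auto
    show ?thesis unfolding fo_def
      by (cases "fst e \<in> X"; cases "snd e \<in> X"; cases "fst e \<in> Y"; cases "snd e \<in> Y") (use b in simp_all)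
  qed
  then have "(\<Sum>e\<in>D. fo x (X \<inter> Y) e + fo x (X \<union> Y) e) \<le> (\<Sum>e\<in>D. fo x X e + fo x Y e)"
    by (rule sum_mono)
  then show ?thesis by (simp add: outw_def sum.distrib)
qed

lemma mixed: "outw D x (X - Y) + outw D x (C - (Y - X)) \<le> outw D x X + outw D x (C - Y)"
proof -
  have "fo x (X - Y) e + fo x (C - (Y - X)) e \<le> fo x X e + fo x (C - Y) e" if "e \<in> D" for e
  proof -
    have c: "fst e \<in> C" "snd e \<in> C" using DC that by auto
    have b: "-1 \<le> x e" "x e \<le> 0" using box that by auto
    show ?thesis unfolding fo_def
      by (cases "fst e \<in> X"; cases "snd e \<in> X"; cases "fst e \<in> Y"; cases "snd e \<in> Y") (use b c in simp_all)
  qed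
  then have "(\<Sum>e\<in>D. fo x (X - Y) e + fo x (C - (Y - X)) e) \<le> (\<Sum>e\<in>D. fo x X e + fo x (C - Y) e)"
    by (rule sum_mono)
  then show ?thesis by (simp add: outw_def sum.distrib)
qed

definition mcnt :: "nat set \<Rightarrow> nat set \<Rightarrow> nat" where
  "mcnt X Y = card {e\<in>D. (fst e \<in> X \<and> snd e \<in> Y) \<or> (fst e \<in> Y \<and> snd e \<in> X)}"

lemma disj: assumes "X \<inter> Y = {}"
  shows "outw D x (X \<union> Y) = outw D x X + outw D x Y - real (mcnt X Y)"
proof -
  have "fo x (X \<union> Y) e = fo x X e + fo x Y e - (if (fst e \<in> X \<and> snd e \<in> Y) \<or> (fst e \<in> Y \<and> snd e \<in> X) then 1 else 0)" for e
    using assms unfolding fo_def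
    by (cases "fst e \<in> X"; cases "snd e \<in> X"; cases "fst e \<in> Y"; cases "snd e \<in> Y") auto
  then have "outw D x (X \<union> Y) = (\<Sum>e\<in>D. fo x X e + fo x Y e - (if (fst e \<in> X \<and> snd e \<in> Y) \<or> (fst e \<in> Y \<and> snd e \<in> X) then 1 else 0))"
    unfolding outw_def by simp
  also have "\<dots> = outw D x X + outw D x Y - (\<Sum>e\<in>D. (if (fst e \<in> X \<and> snd e \<in> Y) \<or> (fst e \<in> Y \<and> snd e \<in> X) then 1 else 0))"
    by (simp add: outw_def sum.distrib sum_subtractf)
  also have "(\<Sum>e\<in>D. (if (fst e \<in> X \<and> snd e \<in> Y) \<or> (fst e \<in> Y \<and> snd e \<in> X) then 1 else 0)) = real (mcnt X Y)"
    unfolding mcnt_def using finD by (simp add: sum.If_cases Int_def)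
  finally show ?thesis .
qed

lemma outC: "outw D x C = 0"
proof -
  have "fo x C e = 0" if "e \<in> D" for e using DC that unfolding fo_def by auto
  then show ?thesis unfolding outw_def by simp
qed

lemma outE: "outw D x {} = 0" unfolding outw_def fo_def by simp

lemma compl_int: assumes "X \<subseteq> C" shows "outw D x X \<in> \<int> \<longleftrightarrow> outw D x (C - X) \<in> \<int>"
proof -
  have "C = X \<union> (C - X)" "X \<inter> (C - X) = {}" using assms by auto
  then have "0 = outw D x X + outw D x (C - X) - real (mcnt X (C - X))"
    using disj[of X "C - X"] outC by simp
  then have e: "outw D x X = real (mcnt X (C - X)) - outw D x (C - X)" by simp
  show ?thesis
  proof
    assume "outw D x X \<in> \<int>"
    then have "real (mcnt X (C - X)) - outw D x X \<in> \<int>" by (intro Ints_diff) auto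
    then show "outw D x (C - X) \<in> \<int>" using e by simp
  next
    assume "outw D x (C - X) \<in> \<int>"
    then show "outw D x X \<in> \<int>" unfolding e by (intro Ints_diff) auto
  qed
qed

lemma lb: "W \<subseteq> C \<Longrightarrow> W \<noteq> {} \<Longrightarrow> W \<noteq> C \<Longrightarrow> 1 \<le> outw D x W" using cut by blast

lemma lbc: "W \<subseteq> C \<Longrightarrow> W \<noteq> {} \<Longrightarrow> W \<noteq> C \<Longrightarrow> 1 \<le> outw D x (C - W)"
  by (rule lb) auto

definition Kset :: "nat \<Rightarrow> nat set \<Rightarrow> bool" where
  "Kset u X \<longleftrightarrow> X \<subseteq> C \<and> u \<notin> X \<and> X \<noteq> {} \<and> (outw D x X = 1 \<or> outw D x (C - X) = 1)"

lemma Kset_int: "Kset u X \<Longrightarrow> outw D x X \<in> \<int>"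
  unfolding Kset_def using compl_int by (metis Ints_1)

lemma union_int:
  assumes u: "u \<in> C"
  shows "S \<subseteq> C \<Longrightarrow> S = \<Union>W \<Longrightarrow> (\<forall>X\<in>W. Kset u X) \<Longrightarrow> outw D x S \<in> \<int>"
proof (induction "card S" arbitrary: S W rule: less_induct)
  case less
  show ?case
  proof (cases "S = {}")
    case True then show ?thesis by (simp add: outE)
  next
    case False
    define SS where "SS = {X. Kset u X \<and> X \<subseteq> S}"
    have finSS: "finite SS" unfolding SS_def
      by (rule finite_subset[of _ "Pow C"]) (use less.prems(1) finC in auto)
    have neSS: "SS \<noteq> {}" using False less.prems unfolding SS_def by auto
    obtain X where X: "X \<in> SS" and Xmax: "\<forall>Z\<in>SS. X \<subseteq> Z \<longrightarrow> X = Z"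
      using finite_has_maximal[OF finSS neSS] by blast
    have XK: "Kset u X" and XS: "X \<subseteq> S" using X unfolding SS_def by auto
    define W' where "W' = {Z - X | Z. Z \<in> SS \<and> \<not> Z \<subseteq> X}"
    have W'K: "Kset u Z'" if "Z' \<in> W'" for Z'
    proof -
      have "\<exists>Z. Z' = Z - X \<and> Z \<in> SS \<and> \<not> Z \<subseteq> X" using that unfolding W'_def by simp
      then obtain Z where Z: "Z' = Z - X" "Z \<in> SS" "\<not> Z \<subseteq> X" by metis
      have ZK: "Kset u Z" and ZS: "Z \<subseteq> S" using Z unfolding SS_def by auto
      have notXZ: "\<not> X \<subset> Z" using Xmax Z(2) by blast
      have basic: "Z - X \<subseteq> C" "u \<notin> Z - X" "Z - X \<noteq> {}" using ZK Z(3) unfolding Kset_def by auto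
      have UK: False if "Kset u (Z \<union> X)" 
      proof -
        have "Z \<union> X \<in> SS" using that ZS XS unfolding SS_def by auto
        then show False using Xmax Z(3) by blast
      qed
      show ?thesis
      proof (cases "Z \<inter> X = {}")
        case True
        then have "Z - X = Z" by auto
        then show ?thesis using ZK Z(1) by simp
      next
        case int: False
        have sC: "Z \<subseteq> C" "X \<subseteq> C" "u \<notin> Z" "u \<notin> X" "Z \<noteq> {}" "X \<noteq> {}" using ZK XK unfolding Kset_def by auto
        have ZX: "\<not> X \<subseteq> Z" using notXZ Z(3) by blast
        consider "outw D x Z = 1" "outw D x X = 1" | "outw D x (C - Z) = 1" "outw D x (C - X) = 1"
          | "outw D x Z = 1" "outw D x (C - X) = 1" | "outw D x (C - Z) = 1" "outw D x X = 1"
          using ZK XK unfolding Kset_def by blast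
        then show ?thesis
        proof cases
          case 1
          have "1 \<le> outw D x (Z \<inter> X)" by (rule lb) (use sC int u in auto)
          moreover have "1 \<le> outw D x (Z \<union> X)" by (rule lb) (use sC u in auto)
          ultimately have "outw D x (Z \<union> X) = 1" using submod[of Z X] 1 by linarith
          then have "Kset u (Z \<union> X)" using sC unfolding Kset_def by auto
          then show ?thesis using UK by blast
        next
          case 2
          have "1 \<le> outw D x (C - (Z \<union> X))" by (rule lb) (use sC u in auto)
          moreover have "1 \<le> outw D x (C - (Z \<inter> X))" by (rule lb) (use sC int u in auto)
          moreover have "outw D x (C - (Z \<union> X)) + outw D x (C - (Z \<inter> X)) \<le> outw D x (C - Z) + outw D x (C - X)"
          proof -
            have "(C - Z) \<inter> (C - X) = C - (Z \<union> X)" "(C - Z) \<union> (C - X) = C - (Z \<inter> X)" by auto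
            then show ?thesis using submod[of "C - Z" "C - X"] by simp
          qed
          ultimately have "outw D x (C - (Z \<union> X)) = 1" using 2 by linarith
          then have "Kset u (Z \<union> X)" using sC unfolding Kset_def by auto
          then show ?thesis using UK by blast
        next
          case 3
          have "1 \<le> outw D x (Z - X)" by (rule lb) (use basic u in auto)
          moreover have "1 \<le> outw D x (C - (X - Z))" by (rule lbc) (use sC ZX u in auto)
          ultimately have "outw D x (Z - X) = 1" using mixed[of Z X] 3 by linarith
          then show ?thesis using basic Z(1) unfolding Kset_def by auto
        next
          case 4
          have "1 \<le> outw D x (X - Z)" by (rule lb) (use sC ZX u in auto)
          moreover have "1 \<le> outw D x (C - (Z - X))" by (rule lbc) (use basic u in auto)
          ultimately have "outw D x (C - (Z - X)) = 1" using mixed[of X Z] 4 by linarith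
          then show ?thesis using basic Z(1) unfolding Kset_def by auto
        qed
      qed
    qed
    have UW': "\<Union>W' = S - X"
    proof
      show "\<Union>W' \<subseteq> S - X"
      proof
        fix y assume "y \<in> \<Union>W'"
        then obtain Z' where "Z' \<in> W'" "y \<in> Z'" by blast
        then have "\<exists>Z. Z' = Z - X \<and> Z \<in> SS \<and> \<not> Z \<subseteq> X" unfolding W'_def by simp
        then obtain Z where Z: "Z' = Z - X" "Z \<in> SS" by metis
        then have "Z \<subseteq> S" unfolding SS_def by simp
        then show "y \<in> S - X" using Z(1) \<open>y \<in> Z'\<close> by blast
      qed
      show "S - X \<subseteq> \<Union>W'"
      proof
        fix y assume y: "y \<in> S - X"
        have "y \<in> \<Union>W" using y less.prems(2) by simp
        then obtain Z where ZW: "Z \<in> W" "y \<in> Z" by blast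
        have "Z \<subseteq> S" using ZW(1) less.prems(2) by blast
        moreover have "Kset u Z" using ZW(1) less.prems(3) by blast
        ultimately have ZSS: "Z \<in> SS" unfolding SS_def by simp
        have nZ: "\<not> Z \<subseteq> X" using y ZW(2) by blast
        have "Z - X \<in> W'" unfolding W'_def mem_Collect_eq
          by (intro exI[of _ Z] conjI refl ZSS nZ)
        then show "y \<in> \<Union>W'" using y ZW(2) by blast
      qed
    qed
    have XC: "X \<noteq> {}" using XK unfolding Kset_def by auto
    have finS: "finite S" using less.prems(1) finC by (rule finite_subset)
    have "card (S - X) < card S"
    proof (rule psubset_card_mono[OF finS])
      show "S - X \<subset> S" using XC XS by blast
    qed
    then have i1: "outw D x (S - X) \<in> \<int>"
    proof (rule less.hyps)
      show "S - X \<subseteq> C" using less.prems(1) by blast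
      show "S - X = \<Union>W'" using UW' by simp
      show "\<forall>X\<in>W'. Kset u X" using W'K by blast
    qed
    have i2: "outw D x X \<in> \<int>" using Kset_int[OF XK] .
    have "S = X \<union> (S - X)" "X \<inter> (S - X) = {}" using XS by auto
    then have "outw D x S = outw D x X + outw D x (S - X) - real (mcnt X (S - X))"
      using disj[of X "S - X"] by simp
    then show ?thesis using i1 i2 by (simp add: Ints_diff Ints_add)
  qed
qed


lemma frac_not_int: "0 < (r::real) \<Longrightarrow> r < 1 \<Longrightarrow> r \<notin> \<int>"
  by (auto elim!: Ints_cases)

definition tightU :: "nat set \<Rightarrow> bool" where
  "tightU U \<longleftrightarrow> U \<subseteq> C \<and> U \<noteq> {} \<and> U \<noteq> C \<and> outw D x U = 1"

definition kap :: "nat \<Rightarrow> nat set set" where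
  "kap v = {U. tightU U \<and> v \<in> U}"

definition Ff :: "edge set" where
  "Ff = {e\<in>D. -1 < x e \<and> x e < 0}"

lemma fo_int: "x e = -1 \<or> x e = 0 \<Longrightarrow> fo x U e \<in> \<int>"
  unfolding fo_def by auto

lemma deg_ne1: "card {e\<in>Ff. crossc kap c e} \<noteq> 1"
proof
  assume "card {e\<in>Ff. crossc kap c e} = 1"
  then obtain e0 where e0s: "{e\<in>Ff. crossc kap c e} = {e0}" by (rule card_1_singletonE)
  then have e0F: "e0 \<in> Ff" and e0c: "crossc kap c e0" by auto
  have e0D: "e0 \<in> D" using e0F unfolding Ff_def by simp
  have e0C: "fst e0 \<in> C" "snd e0 \<in> C" using e0D DC by auto
  define u where "u = (if kap (fst e0) = c then fst e0 else snd e0)"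
  have uC: "u \<in> C" using e0C by (simp add: u_def)
  have ku: "kap u = c" using e0c unfolding u_def crossc_def by auto
  define \<alpha> where "\<alpha> = {v\<in>C. kap v = c}"
  have aC: "\<alpha> \<subseteq> C" unfolding \<alpha>_def by auto
  have memA: "v \<in> \<alpha> \<longleftrightarrow> kap v = c" if "v \<in> C" for v using that unfolding \<alpha>_def by auto
  \<comment> \<open>integrality via covering\<close>
  define WW where "WW = {X. Kset u X \<and> X \<inter> \<alpha> = {}}"
  have cover: "C - \<alpha> = \<Union>WW"
  proof
    show "\<Union>WW \<subseteq> C - \<alpha>" unfolding WW_def Kset_def by blast
    show "C - \<alpha> \<subseteq> \<Union>WW"
    proof
      fix y assume y: "y \<in> C - \<alpha>"
      then have "kap y \<noteq> kap u" using memA ku by auto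
      then obtain U where U: "(U \<in> kap y) \<noteq> (U \<in> kap u)" by blast
      then have tU: "tightU U" unfolding kap_def by auto
      have Uprops: "U \<subseteq> C" "U \<noteq> {}" "U \<noteq> C" "outw D x U = 1" using tU unfolding tightU_def by auto
      have sameA: "v \<in> U \<longleftrightarrow> u \<in> U" if "v \<in> \<alpha>" for v
      proof -
        have "kap v = kap u" using that ku unfolding \<alpha>_def by auto
        then show ?thesis using tU unfolding kap_def by auto
      qed
      show "y \<in> \<Union>WW"
      proof (cases "y \<in> U")
        case True
        then have "u \<notin> U" using U tU unfolding kap_def by auto
        then have "Kset u U" "U \<inter> \<alpha> = {}" using Uprops sameA True unfolding Kset_def by auto
        then have "U \<in> WW" unfolding WW_def by simp
        then show ?thesis using True by blast
      next
        case False
        then have uU: "u \<in> U" using U tU unfolding kap_def by auto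
        have "C - (C - U) = U" using Uprops by auto
        then have "Kset u (C - U)" using Uprops uU False y unfolding Kset_def by auto
        moreover have "(C - U) \<inter> \<alpha> = {}" using sameA uU by auto
        ultimately have "C - U \<in> WW" unfolding WW_def by simp
        then show ?thesis using False y by blast
      qed
    qed
  qed
  have "outw D x (C - \<alpha>) \<in> \<int>"
    by (rule union_int[OF uC _ cover]) (auto simp: WW_def)
  then have intA: "outw D x \<alpha> \<in> \<int>" using compl_int[OF aC] by simp
  have rest: "fo x \<alpha> e \<in> \<int>" if "e \<in> D - {e0}" for e
  proof (cases "e \<in> Ff")
    case True
    then have "\<not> crossc kap c e" using e0s that by auto
    moreover have "fst e \<in> C" "snd e \<in> C" using that DC by auto
    ultimately have "(fst e \<in> \<alpha>) = (snd e \<in> \<alpha>)" using memA unfolding crossc_def by auto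
    then have "fo x \<alpha> e = 0" unfolding fo_def by auto
    then show ?thesis by simp
  next
    case False
    then have "x e = -1 \<or> x e = 0" using box that unfolding Ff_def by force
    then show ?thesis by (rule fo_int)
  qed
  have sumrest: "(\<Sum>e\<in>D - {e0}. fo x \<alpha> e) \<in> \<int>" using rest by (intro Ints_sum) auto
  have split: "outw D x \<alpha> = fo x \<alpha> e0 + (\<Sum>e\<in>D - {e0}. fo x \<alpha> e)"
    unfolding outw_def using finD e0D by (simp add: sum.remove)
  have fr: "0 < fo x \<alpha> e0 \<and> fo x \<alpha> e0 < 1"
  proof -
    have "(fst e0 \<in> \<alpha>) \<noteq> (snd e0 \<in> \<alpha>)" using e0c e0C memA unfolding crossc_def by auto
    moreover have "-1 < x e0" "x e0 < 0" using e0F unfolding Ff_def by auto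
    ultimately show ?thesis unfolding fo_def by auto
  qed
  have "fo x \<alpha> e0 = outw D x \<alpha> - (\<Sum>e\<in>D - {e0}. fo x \<alpha> e)" using split by simp
  also have "\<dots> \<in> \<int>" using intA sumrest by (rule Ints_diff)
  finally show False using frac_not_int fr by blast
qed


definition inP :: "(edge \<Rightarrow> real) \<Rightarrow> bool" where
  "inP y \<longleftrightarrow> (\<forall>e. e \<notin> D \<longrightarrow> y e = 0) \<and> (\<forall>U. U \<subseteq> C \<and> U \<noteq> {} \<and> U \<noteq> C \<longrightarrow> 1 \<le> outw D y U)
      \<and> (\<forall>e\<in>D. -1 \<le> y e \<and> y e \<le> 0)"

lemma outw_lin: "outw D (\<lambda>e. x e + s * d e) U = outw D x U
     + s * (\<Sum>e\<in>D. d e * ((if fst e \<in> U then 1 else 0) - (if snd e \<in> U then 1 else 0)))"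
proof -
  have "fo (\<lambda>e. x e + s * d e) U e = fo x U e + s * (d e * ((if fst e \<in> U then 1 else 0) - (if snd e \<in> U then 1 else 0)))" for e
    unfolding fo_def by (cases "fst e \<in> U"; cases "snd e \<in> U") (simp_all add: algebra_simps)
  then show ?thesis unfolding outw_def by (simp add: sum.distrib sum_distrib_left)
qed

lemma vertex_integral:
  assumes zero: "\<forall>e. e \<notin> D \<longrightarrow> x e = 0"
    and vert: "\<not> (\<exists>y z t. inP y \<and> inP z \<and> y \<noteq> z \<and> 0 < t \<and> t < 1 \<and> x = (\<lambda>e. t * y e + (1 - t) * z e))"
  shows "\<forall>e\<in>D. x e = -1 \<or> x e = 0"
proof (rule ccontr)
  assume "\<not> (\<forall>e\<in>D. x e = -1 \<or> x e = 0)"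
  then obtain e1 where "e1 \<in> D" "\<not> (x e1 = -1 \<or> x e1 = 0)" by blast
  then have e1F: "e1 \<in> Ff" using box unfolding Ff_def by force
  have finF: "finite Ff" unfolding Ff_def using finD by simp
  have FD: "Ff \<subseteq> D" unfolding Ff_def by auto
  obtain d where d0: "\<forall>e. e \<notin> Ff \<longrightarrow> d e = 0" and dne: "\<exists>e\<in>Ff. d e \<noteq> 0"
      and ddiv: "\<forall>c. divc kap Ff d c = 0"
    using circ_exists[OF finF _ ] e1F deg_ne1 by blast
  define Dl where "Dl U = (\<Sum>e\<in>D. d e * ((if fst e \<in> U then 1 else 0) - (if snd e \<in> U then 1 else 0)))" for U
  have Dl_tight: "Dl U = 0" if tU: "tightU U" for U
  proof -
    have UC: "U \<subseteq> C" using tU unfolding tightU_def by auto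
    have finU: "finite U" using UC finC by (rule finite_subset)
    have memk: "kap w \<in> kap ` U \<longleftrightarrow> w \<in> U" for w
    proof
      assume "kap w \<in> kap ` U"
      then obtain v where "v \<in> U" "kap w = kap v" by auto
      then have "U \<in> kap w" using tU unfolding kap_def by auto
      then show "w \<in> U" unfolding kap_def by auto
    qed auto
    have "Dl U = (\<Sum>e\<in>Ff. d e * ((if fst e \<in> U then 1 else 0) - (if snd e \<in> U then 1 else 0)))"
      unfolding Dl_def by (rule sum.mono_neutral_right[OF finD FD]) (use d0 in auto)
    also have "\<dots> = - (\<Sum>c\<in>kap ` U. divc kap Ff d c)"
    proof -
      have "(\<Sum>c\<in>kap ` U. divc kap Ff d c)
          = (\<Sum>e\<in>Ff. \<Sum>c\<in>kap ` U. d e * ((if kap (snd e) = c then 1 else 0) - (if kap (fst e) = c then 1 else 0)))"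
        unfolding divc_def by (rule sum.swap)
      also have "\<dots> = (\<Sum>e\<in>Ff. d e * ((\<Sum>c\<in>kap ` U. (if kap (snd e) = c then 1 else 0)) - (\<Sum>c\<in>kap ` U. (if kap (fst e) = c then 1 else 0))))"
        by (rule sum.cong[OF refl]) (simp add: sum_subtractf[symmetric] sum_distrib_left)
      also have "\<dots> = (\<Sum>e\<in>Ff. d e * ((if snd e \<in> U then 1 else 0) - (if fst e \<in> U then 1 else 0)))"
      proof (rule sum.cong[OF refl])
        fix e
        have "(\<Sum>c\<in>kap ` U. (if kap w = c then 1 else (0::real))) = (if w \<in> U then 1 else 0)" for w
          using finU memk[of w] by (simp add: sum.delta)
        then show "d e * ((\<Sum>c\<in>kap ` U. (if kap (snd e) = c then 1 else 0)) - (\<Sum>c\<in>kap ` U. (if kap (fst e) = c then 1 else 0)))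
           = d e * ((if snd e \<in> U then 1 else 0) - (if fst e \<in> U then 1 else 0))" by simp
      qed
      finally show ?thesis by (simp add: sum_negf[symmetric] algebra_simps)
    qed
    also have "\<dots> = 0" using ddiv by simp
    finally show ?thesis .
  qed
  define M where "M = (\<Sum>e\<in>D. \<bar>d e\<bar>)"
  have M0: "0 \<le> M" unfolding M_def by (simp add: sum_nonneg)
  have dM: "\<bar>d e\<bar> \<le> M" for e
  proof (cases "e \<in> D")
    case True then show ?thesis unfolding M_def using finD by (intro member_le_sum) auto
  next
    case False
    then have "e \<notin> Ff" using FD by blast
    then have "d e = 0" using d0 by blast
    then show ?thesis using M0 by simp
  qed
  have DlM: "\<bar>Dl U\<bar> \<le> M" for U
  proof -
    have "\<bar>Dl U\<bar> \<le> (\<Sum>e\<in>D. \<bar>d e * ((if fst e \<in> U then 1 else 0) - (if snd e \<in> U then 1 else 0))\<bar>)"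
      unfolding Dl_def by (rule sum_abs)
    also have "\<dots> \<le> M" unfolding M_def
      by (rule sum_mono) (auto simp: abs_mult)
    finally show ?thesis .
  qed
  define S1 where "S1 = ((\<lambda>e. - x e) ` Ff) \<union> ((\<lambda>e. 1 + x e) ` Ff)
      \<union> ((\<lambda>U. outw D x U - 1) ` {U. U \<subseteq> C \<and> U \<noteq> {} \<and> U \<noteq> C \<and> outw D x U \<noteq> 1})"
  have finS1: "finite S1" unfolding S1_def using finF finC by auto
  have posS1: "\<forall>s\<in>S1. 0 < s"
  proof
    fix s assume "s \<in> S1"
    then consider (a) e where "e \<in> Ff" "s = - x e" | (b) e where "e \<in> Ff" "s = 1 + x e"
      | (c) U where "U \<subseteq> C" "U \<noteq> {}" "U \<noteq> C" "outw D x U \<noteq> 1" "s = outw D x U - 1"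
      unfolding S1_def by blast
    then show "0 < s"
    proof cases
      case (c U) then show ?thesis using lb[of U] by linarith
    qed (auto simp: Ff_def)
  qed
  define \<delta> where "\<delta> = Min (insert 1 S1)"
  have \<delta>pos: "0 < \<delta>" unfolding \<delta>_def using finS1 posS1 by auto
  have \<delta>le: "\<delta> \<le> s" if "s \<in> S1" for s unfolding \<delta>_def using finS1 that by auto
  define \<epsilon> where "\<epsilon> = \<delta> / (M + 1)"
  have \<epsilon>pos: "0 < \<epsilon>" unfolding \<epsilon>_def using \<delta>pos M0 by simp
  have \<epsilon>M: "\<epsilon> * M < \<delta>"
  proof -
    have "\<epsilon> * M = \<delta> * (M / (M + 1))" unfolding \<epsilon>_def by simp
    also have "\<dots> < \<delta> * 1" using \<delta>pos M0 by (intro mult_strict_left_mono) auto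
    finally show ?thesis by simp
  qed
  have good: "inP (\<lambda>e. x e + s * d e)" if s: "\<bar>s\<bar> = \<epsilon>" for s
  proof -
    have sM: "\<bar>s * d e\<bar> < \<delta>" for e
    proof -
      have "\<bar>s * d e\<bar> = \<epsilon> * \<bar>d e\<bar>" using s by (simp add: abs_mult)
      also have "\<dots> \<le> \<epsilon> * M" using dM \<epsilon>pos by (intro mult_left_mono) auto
      finally show ?thesis using \<epsilon>M by simp
    qed
    have p1: "\<forall>e. e \<notin> D \<longrightarrow> x e + s * d e = 0"
    proof (intro allI impI)
      fix e assume "e \<notin> D"
      then have "e \<notin> Ff" "x e = 0" using FD zero by blast+
      moreover have "d e = 0" using d0 \<open>e \<notin> Ff\<close> by blast
      ultimately show "x e + s * d e = 0" by simp
    qed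
    have p3: "\<forall>e\<in>D. -1 \<le> x e + s * d e \<and> x e + s * d e \<le> 0"
    proof
      fix e assume eD: "e \<in> D"
      show "-1 \<le> x e + s * d e \<and> x e + s * d e \<le> 0"
      proof (cases "e \<in> Ff")
        case True
        then have "\<delta> \<le> - x e" "\<delta> \<le> 1 + x e" using \<delta>le unfolding S1_def by auto
        then show ?thesis using sM[of e] by (auto simp: abs_le_iff abs_less_iff)
      next
        case False
        then have "d e = 0" using d0 by blast
        then show ?thesis using box eD by auto
      qed
    qed
    have p2: "\<forall>U. U \<subseteq> C \<and> U \<noteq> {} \<and> U \<noteq> C \<longrightarrow> 1 \<le> outw D (\<lambda>e. x e + s * d e) U"
    proof (intro allI impI)
      fix U assume U: "U \<subseteq> C \<and> U \<noteq> {} \<and> U \<noteq> C"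
      have eq: "outw D (\<lambda>e. x e + s * d e) U = outw D x U + s * Dl U" unfolding Dl_def by (rule outw_lin)
      show "1 \<le> outw D (\<lambda>e. x e + s * d e) U"
      proof (cases "outw D x U = 1")
        case True
        then have "tightU U" using U unfolding tightU_def by auto
        then show ?thesis using eq True Dl_tight by simp
      next
        case False
        then have "outw D x U - 1 \<in> S1" using U unfolding S1_def by blast
        then have "\<delta> \<le> outw D x U - 1" by (rule \<delta>le)
        moreover have "\<bar>s * Dl U\<bar> \<le> \<epsilon> * M" using s DlM[of U] \<epsilon>pos by (simp add: abs_mult mult_left_mono)
        ultimately show ?thesis using eq \<epsilon>M by (auto simp: abs_le_iff)
      qed
    qed
    show ?thesis unfolding inP_def using p1 p2 p3 by blast
  qed
  obtain e2 where e2: "e2 \<in> Ff" "d e2 \<noteq> 0" using dne by blast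
  define y where "y = (\<lambda>e. x e + \<epsilon> * d e)"
  define z where "z = (\<lambda>e. x e + (- \<epsilon>) * d e)"
  have "inP y" unfolding y_def using good[of \<epsilon>] \<epsilon>pos by simp
  moreover have "inP z" unfolding z_def using good[of "-\<epsilon>"] \<epsilon>pos by simp
  moreover have "y \<noteq> z"
  proof
    assume "y = z"
    then have "y e2 = z e2" by simp
    then show False using e2 \<epsilon>pos unfolding y_def z_def by simp
  qed
  moreover have "x = (\<lambda>e. (1/2) * y e + (1 - 1/2) * z e)" unfolding y_def z_def by (simp add: algebra_simps)
  ultimately have "\<exists>y z t. inP y \<and> inP z \<and> y \<noteq> z \<and> 0 < t \<and> t < 1 \<and> x = (\<lambda>e. t * y e + (1 - t) * z e)"
    by (intro exI[of _ y] exI[of _ z] exI[of _ "1/2::real"]) simp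
  then show False using vert by blast
qed

end




lemma pm_fin: assumes "finite D" shows "finite (pm_vecs D)"
proof -
  have "pm_vecs D \<subseteq> (\<lambda>g e. if e \<in> D then g e else 0) ` (PiE D (\<lambda>_. {-1, 0::real}))"
  proof
    fix y assume y: "y \<in> pm_vecs D"
    have "restrict y D \<in> PiE D (\<lambda>_. {-1, 0})" using y unfolding pm_vecs_def by (auto simp: PiE_iff)
    moreover have "y = (\<lambda>e. if e \<in> D then restrict y D e else 0)"
      using y unfolding pm_vecs_def vecs_on_def by auto
    ultimately show "y \<in> (\<lambda>g e. if e \<in> D then g e else 0) ` (PiE D (\<lambda>_. {-1, 0::real}))" by blast
  qed
  moreover have "finite (PiE D (\<lambda>_. {-1, 0::real}))" using assms by (intro finite_PiE) auto
  ultimately show ?thesis by (meson finite_imageI finite_subset)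
qed

lemma wmax_eq: assumes "finite D" shows "wmax D w = (\<Sum>e\<in>D. max 0 (- w e))"
proof -
  define ys where "ys = (\<lambda>e. if e \<in> D \<and> w e < 0 then (-1::real) else 0)"
  have ysP: "ys \<in> pm_vecs D" unfolding ys_def pm_vecs_def vecs_on_def by auto
  have ysv: "wdot D w ys = (\<Sum>e\<in>D. max 0 (- w e))"
    unfolding wdot_def ys_def by (rule sum.cong) auto
  have le: "wdot D w y \<le> (\<Sum>e\<in>D. max 0 (- w e))" if "y \<in> pm_vecs D" for y
    unfolding wdot_def
  proof (rule sum_mono)
    fix e assume "e \<in> D"
    then have "y e = -1 \<or> y e = 0" using that unfolding pm_vecs_def by auto
    then show "w e * y e \<le> max 0 (- w e)" by auto
  qed
  show ?thesis unfolding wmax_def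
  proof (rule Max_eqI)
    show "finite (wdot D w ` pm_vecs D)" using pm_fin[OF assms] by simp
    show "(\<Sum>e\<in>D. max 0 (- w e)) \<in> wdot D w ` pm_vecs D" by (rule image_eqI[where x=ys]) (use ysv ysP in auto)
  qed (use le in auto)
qed

lemma wdot_le_eq:
  assumes fin: "finite D" and box: "\<forall>e\<in>D. -1 \<le> x e \<and> x e \<le> 0"
  shows "wdot D w x \<le> wmax D w"
    and "wdot D w x = wmax D w \<longleftrightarrow> (\<forall>e\<in>D. w e * x e = max 0 (- w e))"
proof -
  have pt: "w e * x e \<le> max 0 (- w e)" if "e \<in> D" for e
  proof -
    have "-1 \<le> x e" "x e \<le> 0" using box that by auto
    then show ?thesis
      by (cases "w e \<ge> 0") (auto simp: mult_nonneg_nonpos mult_le_cancel_left1 intro: order.trans[of _ "- w e"] mult_left_mono_neg[of "-1" "x e" "w e", simplified])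
  qed
  show "wdot D w x \<le> wmax D w" unfolding wmax_eq[OF fin] wdot_def by (rule sum_mono) (rule pt)
  show "wdot D w x = wmax D w \<longleftrightarrow> (\<forall>e\<in>D. w e * x e = max 0 (- w e))"
  proof
    assume eq: "wdot D w x = wmax D w"
    have "(\<Sum>e\<in>D. max 0 (- w e) - w e * x e) = 0"
      using eq unfolding wmax_eq[OF fin] wdot_def by (simp add: sum_subtractf)
    then have "\<forall>e\<in>D. max 0 (- w e) - w e * x e = 0"
      using sum_nonneg_eq_0_iff[OF fin, of "\<lambda>e. max 0 (- w e) - w e * x e"] pt by auto
    then show "\<forall>e\<in>D. w e * x e = max 0 (- w e)" by auto
  next
    assume "\<forall>e\<in>D. w e * x e = max 0 (- w e)"
    then show "wdot D w x = wmax D w" unfolding wmax_eq[OF fin] wdot_def by simp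
  qed
qed

lemma delta_out_eq: "delta_out D U = {e\<in>D. fst e \<in> U \<and> snd e \<notin> U}"
  unfolding delta_out_def by auto

lemma delta_in_eq: "delta_in D U = {e\<in>D. snd e \<in> U \<and> fst e \<notin> U}"
  unfolding delta_in_def by auto

lemma outw_delta: assumes "finite D"
  shows "outw D x U = real (card (delta_out D U)) + xsum x (delta_out D U) - xsum x (delta_in D U)"
proof -
  have "outw D x U = (\<Sum>e\<in>D. if fst e \<in> U \<and> snd e \<notin> U then 1 + x e else 0) + (\<Sum>e\<in>D. if snd e \<in> U \<and> fst e \<notin> U then - x e else 0)"
    unfolding outw_def fo_def by (simp add: sum.distrib)
  also have "(\<Sum>e\<in>D. if fst e \<in> U \<and> snd e \<notin> U then 1 + x e else 0) = (\<Sum>e\<in>delta_out D U. 1 + x e)"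
    unfolding delta_out_eq using assms by (simp add: sum.inter_filter)
  also have "\<dots> = real (card (delta_out D U)) + xsum x (delta_out D U)"
    unfolding xsum_def by (simp add: sum.distrib)
  also have "(\<Sum>e\<in>D. if snd e \<in> U \<and> fst e \<notin> U then - x e else 0) = (\<Sum>e\<in>delta_in D U. - x e)"
    unfolding delta_in_eq using assms by (simp add: sum.inter_filter)
  also have "\<dots> = - xsum x (delta_in D U)" unfolding xsum_def by (simp add: sum_negf)
  finally show ?thesis by simp
qed

lemma cut_equiv: assumes "finite D"
  shows "(xsum x (delta_in D U) - xsum x (delta_out D U) \<le> real (card (delta_out D U)) - 1) \<longleftrightarrow> 1 \<le> outw D x U"
  using outw_delta[OF assms, of x U] by linarith

lemma polyF_iff:
  assumes "finite (At - Y)"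
  shows "y \<in> polyF_box C At Y \<longleftrightarrow> (\<forall>e. e \<notin> At - Y \<longrightarrow> y e = 0) \<and>
     (\<forall>U. U \<subseteq> C \<and> U \<noteq> {} \<and> U \<noteq> C \<longrightarrow> 1 \<le> outw (At - Y) y U) \<and> (\<forall>e\<in>At - Y. -1 \<le> y e \<and> y e \<le> 0)"
  unfolding polyF_box_def vecs_on_def using cut_equiv[OF assms] by auto

lemma integral_vertex:
  assumes xP: "x \<in> P"
    and Pz: "\<And>y e. y \<in> P \<Longrightarrow> e \<notin> D \<Longrightarrow> y e = 0"
    and Pb: "\<And>y e. y \<in> P \<Longrightarrow> e \<in> D \<Longrightarrow> -1 \<le> y e \<and> y e \<le> 0"
    and xi: "\<And>e. e \<in> D \<Longrightarrow> x e = -1 \<or> x e = 0"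
  shows "is_vertex P x"
  unfolding is_vertex_def
proof (intro conjI xP notI)
  assume "\<exists>y\<in>P. \<exists>z\<in>P. y \<noteq> z \<and> (\<exists>t::real. 0 < t \<and> t < 1 \<and> x = (\<lambda>e. t * y e + (1 - t) * z e))"
  then obtain y z t where yz: "y \<in> P" "z \<in> P" "y \<noteq> z" and t: "0 < t" "t < 1"
    and xe: "x = (\<lambda>e. t * y e + (1 - t) * z e)" by blast
  have "y e = z e" for e
  proof (cases "e \<in> D")
    case False then show ?thesis using Pz[OF yz(1) False] Pz[OF yz(2) False] by simp
  next
    case True
    have hy: "-1 \<le> y e" "y e \<le> 0" and hz: "-1 \<le> z e" "z e \<le> 0" using Pb yz True by auto
    have xv: "x e = t * y e + (1 - t) * z e" using xe by simp
    consider "x e = 0" | "x e = -1" using xi True by blast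
    then show ?thesis
    proof cases
      case 1
      have a: "t * (- y e) \<ge> 0" "(1 - t) * (- z e) \<ge> 0" using t hy hz by (intro mult_nonneg_nonneg; simp)+
      have "t * (- y e) + (1 - t) * (- z e) = 0" using xv 1 by (simp add: algebra_simps)
      then have "t * (- y e) = 0" "(1 - t) * (- z e) = 0" using a by linarith+
      then show ?thesis using t by simp
    next
      case 2
      have a: "t * (y e + 1) \<ge> 0" "(1 - t) * (z e + 1) \<ge> 0" using t hy hz by (intro mult_nonneg_nonneg; simp)+
      have "t * (y e + 1) + (1 - t) * (z e + 1) = 0" using xv 2 by (simp add: algebra_simps)
      then have "t * (y e + 1) = 0" "(1 - t) * (z e + 1) = 0" using a by linarith+
      then show ?thesis using t by simp
    qed
  qed
  then show False using yz(3) by blast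
qed

definition YY :: "edge set \<Rightarrow> edge set \<Rightarrow> edge set \<Rightarrow> edge set" where
  "YY At B E = {e \<in> At \<union> B. e \<notin> E \<and> (snd e, fst e) \<notin> E}"

definition xx :: "edge set \<Rightarrow> edge set \<Rightarrow> edge set \<Rightarrow> edge \<Rightarrow> real" where
  "xx At B E = (\<lambda>e. if e \<in> At - YY At B E \<and> (snd e, fst e) \<in> E then -1 else 0)"

locale setting =
  fixes n :: nat and C :: "nat set" and A B ComCh NoComCh At :: "edge set"
  assumes C_sub: "C \<subseteq> {1..n}" and C_ne: "C \<noteq> {}"
    and A_sub: "A \<subseteq> C \<times> C" and A_sym: "\<forall>(a, b)\<in>A. (b, a) \<in> A"
    and A_irrefl: "\<forall>a. (a, a) \<notin> A"
    and B_sub: "B \<subseteq> ({1..n} - C) \<times> C"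
    and ComCh_sub: "ComCh \<subseteq> ({1..n} - C) \<times> ({1..n} - C)"
    and NoComCh_sub: "NoComCh \<subseteq> ({1..n} - C) \<times> ({1..n} - C)"
    and At_sub: "At \<subseteq> A"
    and At_one: "\<forall>(a, b)\<in>A. ((a, b) \<in> At \<longleftrightarrow> (b, a) \<notin> At)"
begin

lemma finC: "finite C" using C_sub finite_subset by blast

lemma AtC: "At \<subseteq> C \<times> C" using At_sub A_sub by blast

lemma Asym: "(a, b) \<in> A \<Longrightarrow> (b, a) \<in> A" using A_sym by blast

lemma AC: "(a, b) \<in> A \<Longrightarrow> a \<in> C \<and> b \<in> C" using A_sub by blast

lemma Airr: "(a, b) \<in> A \<Longrightarrow> a \<noteq> b" using A_irrefl by blast

lemma BC: "(a, b) \<in> B \<Longrightarrow> a \<notin> C \<and> b \<in> C \<and> a \<in> {1..n} \<and> b \<in> {1..n}"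
  using B_sub C_sub by blast

lemma At_pair: "(a, b) \<in> A \<Longrightarrow> ((a, b) \<in> At \<and> (b, a) \<notin> At) \<or> ((b, a) \<in> At \<and> (a, b) \<notin> At)"
  using At_one by blast

lemma At_not_both: "(a, b) \<in> At \<Longrightarrow> (b, a) \<notin> At"
  using At_one At_sub by blast

lemma AB_n: "(a, b) \<in> A \<union> B \<Longrightarrow> a \<in> {1..n} \<and> b \<in> {1..n}"
  using AC BC C_sub by blast

lemma AB_ne: "(a, b) \<in> A \<union> B \<Longrightarrow> a \<noteq> b"
  using Airr BC by blast

lemma AB_C: "(a, b) \<in> A \<union> B \<Longrightarrow> b \<in> C"
  using AC BC by blast

lemma finAt: "finite At" using AtC finC by (meson finite_SigmaI finite_subset)

lemma p_adj_sym: "p_adjacent E a b \<longleftrightarrow> p_adjacent E b a"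
  unfolding p_adjacent_def common_child_def by blast

end


context setting begin

context
  fixes Y :: "edge set" and x :: "edge \<Rightarrow> real"
  assumes Ysub: "Y \<subseteq> At \<union> B"
    and xint: "\<forall>e\<in>At - Y. x e = -1 \<or> x e = 0"
begin

abbreviation EE where "EE \<equiv> Etilde_YJ At B Y (Jx At Y x)"

lemma memE: "(p, q) \<in> EE \<longleftrightarrow> ((q, p) \<in> At - Y \<and> x (q, p) = -1) \<or> ((p, q) \<in> At - Y \<and> x (p, q) = 0) \<or> (p, q) \<in> B - Y"
proof -
  have "(p, q) \<in> At - Y \<Longrightarrow> x (p, q) \<noteq> -1 \<longleftrightarrow> x (p, q) = 0" using xint by force
  then show ?thesis unfolding Etilde_YJ_def Jx_def by auto
qed

lemma E_AB: "(p, q) \<in> EE \<Longrightarrow> (p, q) \<in> A \<union> B"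
  using memE At_sub Asym by blast

lemma E_head: "(p, q) \<in> EE \<Longrightarrow> q \<in> C"
  using E_AB AB_C by blast

lemma E_tailout: "(p, q) \<in> EE \<Longrightarrow> p \<notin> C \<Longrightarrow> (p, q) \<in> B - Y"
  using memE AtC by blast

lemma E_noY: "(p, q) \<in> EE \<Longrightarrow> (p, q) \<notin> Y \<and> (q, p) \<notin> Y"
proof -
  assume pq: "(p, q) \<in> EE"
  consider "(q, p) \<in> At - Y" | "(p, q) \<in> At - Y" | "(p, q) \<in> B - Y" using memE pq by blast
  then show ?thesis
  proof cases
    case 1
    then have "(p, q) \<notin> At" using At_not_both by blast
    moreover have "(p, q) \<notin> B" using 1 AtC BC by blast
    ultimately show ?thesis using 1 Ysub by blast
  next
    case 2
    then have "(q, p) \<notin> At" using At_not_both by blast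
    moreover have "(q, p) \<notin> B" using 2 AtC BC by blast
    ultimately show ?thesis using 2 Ysub by blast
  next
    case 3
    then have "(q, p) \<notin> At" "(q, p) \<notin> B" using AtC BC by blast+
    then show ?thesis using 3 Ysub by blast
  qed
qed

lemma E_n: "(p, q) \<in> EE \<Longrightarrow> p \<in> {1..n} \<and> q \<in> {1..n}"
  using E_AB AB_n by blast

lemma E_ne: "(p, q) \<in> EE \<Longrightarrow> p \<noteq> q"
  using E_AB AB_ne by blast

lemma E_trancl_head: "(p, q) \<in> EE\<^sup>+ \<Longrightarrow> q \<in> C"
  by (induction rule: trancl_induct) (auto intro: E_head)

lemma pair_present:
  assumes "(p, q) \<in> A \<union> B" "(p, q) \<notin> Y" "(q, p) \<notin> Y"
  shows "(p, q) \<in> EE \<or> (q, p) \<in> EE"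
proof (cases "(p, q) \<in> A")
  case True
  then consider "(p, q) \<in> At" | "(q, p) \<in> At" using At_pair by blast
  then show ?thesis
  proof cases
    case 1
    then have "(p, q) \<in> At - Y" using assms by blast
    then show ?thesis using xint memE[of p q] memE[of q p] by blast
  next
    case 2
    then have "(q, p) \<in> At - Y" using assms by blast
    then show ?thesis using xint memE[of p q] memE[of q p] by blast
  qed
next
  case False
  then have "(p, q) \<in> B - Y" using assms by blast
  then show ?thesis using memE by blast
qed

lemma dir_pair:
  assumes "(p, q) \<in> A \<union> B" "(p, q) \<notin> Y" "(q, p) \<notin> Y"
  shows "(p, q) \<in> EE \<longleftrightarrow> (((q, p) \<in> At - Y \<longrightarrow> x (q, p) = -1) \<and> ((p, q) \<in> At - Y \<longrightarrow> x (p, q) = 0))"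
proof (cases "(p, q) \<in> A")
  case True
  have nB: "(p, q) \<notin> B" using True AC BC by blast
  consider "(p, q) \<in> At" "(q, p) \<notin> At" | "(q, p) \<in> At" "(p, q) \<notin> At" using At_pair True by blast
  then show ?thesis
  proof cases
    case 1
    then show ?thesis using memE[of p q] nB assms(2) by auto
  next
    case 2
    then show ?thesis using memE[of p q] nB assms(3) by auto
  qed
next
  case False
  then have B: "(p, q) \<in> B - Y" using assms by blast
  then have "(p, q) \<notin> At" "(q, p) \<notin> At" using AtC BC by blast+
  then show ?thesis using B memE by blast
qed

lemma w_equal_iff:
  assumes adm: "admissible C A B Y a b c" and ac: "a \<noteq> c"
  shows "wdot (At - Y) (weight a b c) x = wmax (At - Y) (weight a b c) \<longleftrightarrow> (a, b) \<in> EE \<and> (c, b) \<in> EE"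
proof -
  have finD: "finite (At - Y)" using finAt by simp
  have box: "\<forall>e\<in>At - Y. -1 \<le> x e \<and> x e \<le> 0" using xint by force
  have abAB: "(a, b) \<in> A \<union> B" and cbAB: "(c, b) \<in> A \<union> B"
    and nY: "(a, b) \<notin> Y" "(b, a) \<notin> Y" "(c, b) \<notin> Y" "(b, c) \<notin> Y"
    using adm unfolding admissible_def by auto
  have ab: "a \<noteq> b" using abAB AB_ne by blast
  have cb: "c \<noteq> b" using cbAB AB_ne by blast
  have pt: "(weight a b c e * x e = max 0 (- weight a b c e)) \<longleftrightarrow>
       ((e = (b, a) \<or> e = (b, c)) \<longrightarrow> x e = -1) \<and> ((e = (a, b) \<or> e = (c, b)) \<longrightarrow> x e = 0)"
    if eD: "e \<in> At - Y" for e
  proof -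
    have xe: "x e = -1 \<or> x e = 0" using xint eD by blast
    consider "e = (b, a) \<or> e = (b, c)" | "\<not> (e = (b, a) \<or> e = (b, c))" "e = (a, b) \<or> e = (c, b)"
      | "\<not> (e = (b, a) \<or> e = (b, c))" "\<not> (e = (a, b) \<or> e = (c, b))" by blast
    then show ?thesis
    proof cases
      case 1
      then have w: "weight a b c e = -1" unfolding weight_def by simp
      have "\<not> (e = (a, b) \<or> e = (c, b))" using 1 ab cb ac by auto
      then show ?thesis using w xe 1 by auto
    next
      case 2
      then have w: "weight a b c e = 1" unfolding weight_def by simp
      then show ?thesis using xe 2 by auto
    next
      case 3
      then have w: "weight a b c e = 0" unfolding weight_def by simp
      then show ?thesis using 3 by auto
    qed
  qed
  have "wdot (At - Y) (weight a b c) x = wmax (At - Y) (weight a b c) \<longleftrightarrow>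
      (\<forall>e\<in>At - Y. weight a b c e * x e = max 0 (- weight a b c e))"
    by (rule wdot_le_eq(2)[OF finD box])
  also have "\<dots> \<longleftrightarrow> (\<forall>e\<in>At - Y. ((e = (b, a) \<or> e = (b, c)) \<longrightarrow> x e = -1) \<and> ((e = (a, b) \<or> e = (c, b)) \<longrightarrow> x e = 0))"
    using pt by blast
  also have "\<dots> \<longleftrightarrow> (((b, a) \<in> At - Y \<longrightarrow> x (b, a) = -1) \<and> ((a, b) \<in> At - Y \<longrightarrow> x (a, b) = 0))
                   \<and> (((b, c) \<in> At - Y \<longrightarrow> x (b, c) = -1) \<and> ((c, b) \<in> At - Y \<longrightarrow> x (c, b) = 0))"
    by blast
  also have "\<dots> \<longleftrightarrow> (a, b) \<in> EE \<and> (c, b) \<in> EE"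
    using dir_pair[OF abAB nY(1,2)] dir_pair[OF cbAB nY(3,4)] by simp
  finally show ?thesis .
qed

lemma E_antisym: assumes "(a, b) \<in> EE" "(b, a) \<in> EE" shows False
proof -
  have h1: "((b, a) \<in> At - Y \<and> x (b, a) = -1) \<or> ((a, b) \<in> At - Y \<and> x (a, b) = 0) \<or> (a, b) \<in> B - Y"
    using memE assms(1) by blast
  have h2: "((a, b) \<in> At - Y \<and> x (a, b) = -1) \<or> ((b, a) \<in> At - Y \<and> x (b, a) = 0) \<or> (b, a) \<in> B - Y"
    using memE assms(2) by blast
  have n1: "(a, b) \<in> At \<Longrightarrow> (b, a) \<notin> At" "(b, a) \<in> At \<Longrightarrow> (a, b) \<notin> At" using At_not_both by blast+
  have n2: "(a, b) \<in> At \<Longrightarrow> (a, b) \<notin> B \<and> (b, a) \<notin> B" "(b, a) \<in> At \<Longrightarrow> (a, b) \<notin> B \<and> (b, a) \<notin> B"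
    using AtC BC by blast+
  have n3: "(a, b) \<in> B \<Longrightarrow> (b, a) \<notin> B" using BC by blast
  show False using h1 h2 n1 n2 n3 by auto
qed

lemma arc_outw:
  assumes "(p, q) \<in> EE" "p \<in> U" "q \<notin> U" "p \<in> C"
  shows "1 \<le> outw (At - Y) x U"
proof -
  have fin: "finite (At - Y)" using finAt by simp
  have nonneg: "0 \<le> fo x U e" if "e \<in> At - Y" for e
  proof -
    have "-1 \<le> x e" "x e \<le> 0" using xint that by force+
    then show ?thesis unfolding fo_def by auto
  qed
  have "(p, q) \<notin> B" using assms(4) BC by blast
  then consider "(q, p) \<in> At - Y" "x (q, p) = -1" | "(p, q) \<in> At - Y" "x (p, q) = 0"
    using memE assms(1) by blast
  then obtain e where e: "e \<in> At - Y" "fo x U e = 1"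
  proof cases
    case 1
    then have "fo x U (q, p) = 1" using assms(2,3) unfolding fo_def by simp
    then show ?thesis using that 1 by blast
  next
    case 2
    then have "fo x U (p, q) = 1" using assms(2,3) unfolding fo_def by simp
    then show ?thesis using that 2 by blast
  qed
  have "fo x U e \<le> outw (At - Y) x U" unfolding outw_def
    by (rule member_le_sum[OF e(1)]) (use nonneg fin in auto)
  then show ?thesis using e(2) by simp
qed

end

context
  fixes Y :: "edge set" and x :: "edge \<Rightarrow> real"
  assumes Ysub: "Y \<subseteq> At \<union> B"
    and xint: "\<forall>e\<in>At - Y. x e = -1 \<or> x e = 0"
    and cutc: "\<forall>U. U \<subseteq> C \<and> U \<noteq> {} \<and> U \<noteq> C \<longrightarrow> 1 \<le> outw (At - Y) x U"
begin

lemma cut_arc: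
  assumes U: "U \<subseteq> C" "U \<noteq> {}" "U \<noteq> C"
  shows "\<exists>p q. (p, q) \<in> EE Y x \<and> p \<in> U \<and> q \<in> C - U"
proof (rule ccontr)
  assume no: "\<not> ?thesis"
  have "fo x U e = 0" if eD: "e \<in> At - Y" for e
  proof -
    obtain a b where e: "e = (a, b)" by force
    have abC: "a \<in> C" "b \<in> C" using eD e AtC by auto
    have xe: "x e = -1 \<or> x e = 0" using xint eD by blast
    show ?thesis
    proof (cases "a \<in> U \<and> b \<notin> U")
      case True
      have "x e \<noteq> 0"
      proof
        assume "x e = 0"
        then have "(a, b) \<in> EE Y x" using memE[OF Ysub xint, of a b] eD e by blast
        then show False using no True abC by blast
      qed
      then have "x e = -1" using xe by blast
      then show ?thesis using True e unfolding fo_def by simp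
    next
      case False
      show ?thesis
      proof (cases "b \<in> U \<and> a \<notin> U")
        case True
        have "x e \<noteq> -1"
        proof
          assume "x e = -1"
          then have "(b, a) \<in> EE Y x" using memE[OF Ysub xint, of b a] eD e by blast
          then show False using no True abC by blast
        qed
        then have "x e = 0" using xe by blast
        then show ?thesis using True e unfolding fo_def by simp
      next
        case False2: False
        then show ?thesis using False e unfolding fo_def by auto
      qed
    qed
  qed
  then have "outw (At - Y) x U = 0" unfolding outw_def by simp
  moreover have "1 \<le> outw (At - Y) x U" using cutc U by blast
  ultimately show False by simp
qed

lemma strong:
  assumes i: "i \<in> C" and j: "j \<in> C"
  shows "(i, j) \<in> (EE Y x)\<^sup>*"
proof -
  define R where "R = {k\<in>C. (i, k) \<in> (EE Y x)\<^sup>*}"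
  have "R = C"
  proof (rule ccontr)
    assume nC: "R \<noteq> C"
    have sub: "R \<subseteq> C" unfolding R_def by blast
    have ne: "R \<noteq> {}" using i unfolding R_def by blast
    obtain p q where pq: "(p, q) \<in> EE Y x" "p \<in> R" "q \<in> C - R" using cut_arc[OF sub ne nC] by blast
    have "(i, p) \<in> (EE Y x)\<^sup>*" using pq(2) unfolding R_def by simp
    then have "(i, q) \<in> (EE Y x)\<^sup>*" using pq(1) by (rule rtrancl.rtrancl_into_rtrancl)
    then have "q \<in> R" using pq(3) unfolding R_def by simp
    then show False using pq(3) by simp
  qed
  then show ?thesis using j unfolding R_def by blast
qed

lemma strong_rev:
  assumes i: "i \<in> C" and j: "j \<in> C"
  shows "(j, i) \<in> (EE Y x)\<^sup>*"
proof -
  define R where "R = {k\<in>C. (k, i) \<in> (EE Y x)\<^sup>*}"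
  have "R = C"
  proof (rule ccontr)
    assume nC: "R \<noteq> C"
    have iR: "i \<in> R" using i unfolding R_def by simp
    have sub: "C - R \<subseteq> C" by blast
    have ne: "C - R \<noteq> {}" using nC unfolding R_def by blast
    have nC2: "C - R \<noteq> C" using iR i by blast
    obtain p q where pq: "(p, q) \<in> EE Y x" "p \<in> C - R" "q \<in> C - (C - R)" using cut_arc[OF sub ne nC2] by blast
    have "(q, i) \<in> (EE Y x)\<^sup>*" using pq(3) unfolding R_def by simp
    then have "(p, i) \<in> (EE Y x)\<^sup>*" using pq(1) by (rule converse_rtrancl_into_rtrancl[rotated])
    then have "p \<in> R" using pq(2) unfolding R_def by simp
    then show False using pq(2) by simp
  qed
  then show ?thesis using j unfolding R_def by blast
qed

lemma no_bad_common_child: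
  assumes c1: "\<forall>a b c. a \<in> {1..n} \<and> b \<in> {1..n} \<and> c \<in> {1..n} \<and> a \<noteq> c \<and>
              admissible C A B Y a b c \<and> (a, c) \<notin> A \<union> B \<longrightarrow>
              wdot (At - Y) (weight a b c) x < wmax (At - Y) (weight a b c)"
    and ac: "(a, c) \<in> EE Y x" and bc: "(b, c) \<in> EE Y x" and cb: "(c, b) \<in> (EE Y x)\<^sup>*"
    and ab: "a \<noteq> b" and abn: "a \<in> {1..n}" "b \<in> {1..n}" and nab: "(a, b) \<notin> A \<union> B"
  shows False
proof -
  have "c \<noteq> b" using E_ne[OF Ysub xint bc] by simp
  then have "(c, b) \<in> (EE Y x)\<^sup>+" using cb by (meson rtranclD)
  then have bC: "b \<in> C" using E_trancl_head[OF Ysub xint] by blast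
  have cn: "c \<in> {1..n}" using E_n[OF Ysub xint ac] by blast
  have adm: "admissible C A B Y a c b"
    unfolding admissible_def using bC E_AB[OF Ysub xint ac] E_AB[OF Ysub xint bc]
      E_noY[OF Ysub xint ac] E_noY[OF Ysub xint bc] by blast
  have "wdot (At - Y) (weight a c b) x < wmax (At - Y) (weight a c b)"
    using c1 abn cn ab adm nab by blast
  moreover have "wdot (At - Y) (weight a c b) x = wmax (At - Y) (weight a c b)"
    using w_equal_iff[OF Ysub xint adm ab] ac bc by blast
  ultimately show False by simp
qed

lemma padj_of_pair:
  assumes c2: "\<forall>(a, c)\<in>Y. \<exists>b\<in>C. admissible C A B Y a b c \<and>
              wdot (At - Y) (weight a b c) x = wmax (At - Y) (weight a b c)"
    and pq: "(p, q) \<in> A \<union> B"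
  shows "p_adjacent (EE Y x) p q"
proof -
  have pq_ne: "p \<noteq> q" using pq AB_ne by blast
  have fromY: "p_adjacent (EE Y x) a' c'" if Y: "(a', c') \<in> Y" for a' c'
  proof -
    obtain b where b: "b \<in> C" "admissible C A B Y a' b c'"
      "wdot (At - Y) (weight a' b c') x = wmax (At - Y) (weight a' b c')" using c2 Y by blast
    have acAB: "(a', c') \<in> A \<union> B" using Y Ysub At_sub by blast
    have ac: "a' \<noteq> c'" using acAB AB_ne by blast
    have cC: "c' \<in> C" using acAB AB_C by blast
    have E: "(a', b) \<in> EE Y x" "(c', b) \<in> EE Y x" using w_equal_iff[OF Ysub xint b(2) ac] b(3) by blast+
    have "(b, c') \<in> (EE Y x)\<^sup>*" using strong[OF b(1) cC] .
    then show ?thesis unfolding p_adjacent_def common_child_def ancestor_def using E ac by blast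
  qed
  show ?thesis
  proof (cases "(p, q) \<in> Y")
    case True then show ?thesis using fromY by blast
  next
    case False
    show ?thesis
    proof (cases "(q, p) \<in> Y")
      case True then show ?thesis using fromY p_adj_sym by blast
    next
      case False2: False
      then have "(p, q) \<in> EE Y x \<or> (q, p) \<in> EE Y x" using pair_present[OF Ysub xint pq False] by blast
      then show ?thesis unfolding p_adjacent_def using pq_ne by blast
    qed
  qed
qed

lemma part2_SCCR:
  assumes rem: "removable C A B ComCh NoComCh Y"
    and c1: "\<forall>a b c. a \<in> {1..n} \<and> b \<in> {1..n} \<and> c \<in> {1..n} \<and> a \<noteq> c \<and>
              admissible C A B Y a b c \<and> (a, c) \<notin> A \<union> B \<longrightarrow>
              wdot (At - Y) (weight a b c) x < wmax (At - Y) (weight a b c)"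
    and c2: "\<forall>(a, c)\<in>Y. \<exists>b\<in>C. admissible C A B Y a b c \<and>
              wdot (At - Y) (weight a b c) x = wmax (At - Y) (weight a b c)"
  shows "SCCR n C A B ComCh NoComCh (EE Y x)"
proof -
  have S1: "\<forall>a\<in>{1..n}. \<forall>b\<in>{1..n}. a \<noteq> b \<longrightarrow>
        (p_adjacent (EE Y x) a b \<longleftrightarrow> ((a, b) \<in> A \<union> B \<or> (b, a) \<in> A \<union> B))"
  proof (intro ballI impI)
    fix a b assume an: "a \<in> {1..n}" and bn: "b \<in> {1..n}" and ab: "a \<noteq> b"
    show "p_adjacent (EE Y x) a b \<longleftrightarrow> ((a, b) \<in> A \<union> B \<or> (b, a) \<in> A \<union> B)"
    proof
      assume pa: "p_adjacent (EE Y x) a b"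
      show "(a, b) \<in> A \<union> B \<or> (b, a) \<in> A \<union> B"
      proof (rule ccontr)
        assume nn: "\<not> ((a, b) \<in> A \<union> B \<or> (b, a) \<in> A \<union> B)"
        then have "(a, b) \<notin> EE Y x" "(b, a) \<notin> EE Y x" using E_AB[OF Ysub xint] by blast+
        then obtain c where cc: "(a, c) \<in> EE Y x" "(b, c) \<in> EE Y x"
            and anc: "(c, a) \<in> (EE Y x)\<^sup>* \<or> (c, b) \<in> (EE Y x)\<^sup>*"
          using pa unfolding p_adjacent_def common_child_def ancestor_def by blast
        from anc show False
        proof
          assume "(c, a) \<in> (EE Y x)\<^sup>*"
          then show False using no_bad_common_child[OF c1 cc(2) cc(1) _ _ bn an] ab nn by blast
        next
          assume "(c, b) \<in> (EE Y x)\<^sup>*"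
          then show False using no_bad_common_child[OF c1 cc(1) cc(2) _ ab an bn] nn by blast
        qed
      qed
    next
      assume "(a, b) \<in> A \<union> B \<or> (b, a) \<in> A \<union> B"
      then show "p_adjacent (EE Y x) a b" using padj_of_pair[OF c2] p_adj_sym by blast
    qed
  qed
  obtain i where iC: "i \<in> C" using C_ne by blast
  have S2: "is_SCC n (EE Y x) C"
    unfolding is_SCC_def
  proof (rule bexI[of _ i])
    show "i \<in> {1..n}" using iC C_sub by blast
    show "C = {j \<in> {1..n}. i = j \<or> ((i, j) \<in> (EE Y x)\<^sup>+ \<and> (j, i) \<in> (EE Y x)\<^sup>+)}"
    proof
      show "C \<subseteq> {j \<in> {1..n}. i = j \<or> ((i, j) \<in> (EE Y x)\<^sup>+ \<and> (j, i) \<in> (EE Y x)\<^sup>+)}"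
      proof
        fix j assume jC: "j \<in> C"
        have "i = j \<or> ((i, j) \<in> (EE Y x)\<^sup>+ \<and> (j, i) \<in> (EE Y x)\<^sup>+)"
        proof (cases "i = j")
          case False
          have "(i, j) \<in> (EE Y x)\<^sup>*" "(j, i) \<in> (EE Y x)\<^sup>*" using strong[OF iC jC] strong_rev[OF iC jC] .
          then show ?thesis using False rtranclD[of i j] rtranclD[of j i] by blast
        qed simp
        then show "j \<in> {j \<in> {1..n}. i = j \<or> ((i, j) \<in> (EE Y x)\<^sup>+ \<and> (j, i) \<in> (EE Y x)\<^sup>+)}"
          using jC C_sub by blast
      qed
      show "{j \<in> {1..n}. i = j \<or> ((i, j) \<in> (EE Y x)\<^sup>+ \<and> (j, i) \<in> (EE Y x)\<^sup>+)} \<subseteq> C"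
        using iC E_trancl_head[OF Ysub xint] by blast
    qed
  qed
  have S3: "\<forall>i\<in>C. \<forall>j\<in>{1..n} - C. \<not> (i, j) \<in> (EE Y x)\<^sup>+"
    using E_trancl_head[OF Ysub xint] by blast
  have S4: "\<forall>(a, b)\<in>ComCh. \<exists>c\<in>C. common_child (EE Y x) a b c"
  proof (intro ballI, clarify)
    fix a b assume "(a, b) \<in> ComCh"
    then obtain c where c: "c \<in> C" "(a, c) \<in> B - Y" "(b, c) \<in> B - Y"
      using rem unfolding removable_def by blast
    then have "(a, c) \<in> EE Y x" "(b, c) \<in> EE Y x" using memE[OF Ysub xint] by blast+
    then show "\<exists>c\<in>C. common_child (EE Y x) a b c" using c(1) unfolding common_child_def by blast
  qed
  have S5: "\<forall>(a, b)\<in>NoComCh. \<not> (\<exists>c\<in>C. common_child (EE Y x) a b c)"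
  proof (intro ballI, clarify)
    fix a b c assume ab: "(a, b) \<in> NoComCh" and cC: "c \<in> C" and cc: "common_child (EE Y x) a b c"
    have "a \<notin> C" "b \<notin> C" using ab NoComCh_sub by blast+
    then have "(a, c) \<in> B - Y" "(b, c) \<in> B - Y"
      using cc E_tailout[OF Ysub xint] unfolding common_child_def by blast+
    then show False using rem ab cC unfolding removable_def by blast
  qed
  show ?thesis unfolding SCCR_def using S1 S2 S3 S4 S5 by blast
qed

end

context
  fixes E :: "edge set"
  assumes Esub: "E \<subseteq> {1..n} \<times> {1..n}" and sccr: "SCCR n C A B ComCh NoComCh E"
    and anti: "\<forall>a\<in>{1..n}. \<forall>b\<in>{1..n}. a \<noteq> b \<longrightarrow> \<not> ((a, b) \<in> E \<and> (b, a) \<in> E)"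
begin

lemma F_padj: "a \<in> {1..n} \<Longrightarrow> b \<in> {1..n} \<Longrightarrow> a \<noteq> b \<Longrightarrow> p_adjacent E a b \<longleftrightarrow> (a, b) \<in> A \<union> B \<or> (b, a) \<in> A \<union> B"
  using sccr unfolding SCCR_def by blast

lemma F_noout: "i \<in> C \<Longrightarrow> j \<in> {1..n} \<Longrightarrow> j \<notin> C \<Longrightarrow> (i, j) \<notin> E\<^sup>+"
  using sccr unfolding SCCR_def by blast

lemma F_edge: assumes "(p, q) \<in> E" "p \<noteq> q" shows "(p, q) \<in> A \<union> B \<or> (q, p) \<in> A \<union> B"
proof -
  have "p \<in> {1..n}" "q \<in> {1..n}" using assms Esub by auto
  moreover have "p_adjacent E p q" using assms unfolding p_adjacent_def by blast
  ultimately show ?thesis using F_padj assms(2) by blast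
qed

lemma F_head: assumes "(p, q) \<in> E" "p \<noteq> q" shows "q \<in> C"
proof (rule ccontr)
  assume qC: "q \<notin> C"
  have qn: "q \<in> {1..n}" using assms Esub by auto
  have "(p, q) \<in> A \<union> B \<or> (q, p) \<in> A \<union> B" by (rule F_edge[OF assms])
  then have "p \<in> C" using qC AC BC by blast
  moreover have "(p, q) \<in> E\<^sup>+" using assms(1) by blast
  ultimately show False using F_noout qn qC by blast
qed

lemma F_AB: assumes "(p, q) \<in> E" "p \<noteq> q" shows "(p, q) \<in> A \<union> B"
proof -
  have "q \<in> C" by (rule F_head[OF assms])
  then show ?thesis using F_edge[OF assms] Asym BC by blast
qed

lemma F_Bpair: assumes "(a, b) \<in> B" shows "(b, a) \<notin> E"
proof
  assume "(b, a) \<in> E"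
  then have "(b, a) \<in> E\<^sup>+" by blast
  then show False using F_noout assms BC by blast
qed

lemma F_strong: assumes b: "b \<in> C" and c: "c \<in> C" shows "(b, c) \<in> E\<^sup>*"
proof -
  obtain i where i: "i \<in> {1..n}" and Ceq: "C = {j \<in> {1..n}. i = j \<or> ((i, j) \<in> E\<^sup>+ \<and> (j, i) \<in> E\<^sup>+)}"
    using sccr unfolding SCCR_def is_SCC_def by blast
  have "b = i \<or> (b, i) \<in> E\<^sup>+" using b Ceq by blast
  then have bi: "(b, i) \<in> E\<^sup>*" by (auto intro: trancl_into_rtrancl)
  have "c = i \<or> (i, c) \<in> E\<^sup>+" using c Ceq by blast
  then have ic: "(i, c) \<in> E\<^sup>*" by (auto intro: trancl_into_rtrancl)
  show ?thesis using bi ic by (rule rtrancl_trans)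
qed

abbreviation "Y0 \<equiv> YY At B E"
abbreviation "x0 \<equiv> xx At B E"

lemma Y0sub: "Y0 \<subseteq> At \<union> B" unfolding YY_def by blast

lemma x0int: "\<forall>e\<in>At - Y0. x0 e = -1 \<or> x0 e = 0" unfolding xx_def by auto

lemma notY_present: "(p, q) \<in> At \<union> B \<Longrightarrow> (p, q) \<notin> Y0 \<Longrightarrow> (p, q) \<in> E \<or> (q, p) \<in> E"
  unfolding YY_def by auto

lemma inE_notY: "(p, q) \<in> E \<Longrightarrow> (p, q) \<notin> Y0 \<and> (q, p) \<notin> Y0"
  unfolding YY_def by auto

lemma E_iff_EE:
  assumes pq: "(p, q) \<in> A \<union> B" and nY: "(p, q) \<notin> Y0" "(q, p) \<notin> Y0"
  shows "(p, q) \<in> E \<longleftrightarrow> (p, q) \<in> EE Y0 x0"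
proof -
  have dp: "(p, q) \<in> EE Y0 x0 \<longleftrightarrow> (((q, p) \<in> At - Y0 \<longrightarrow> x0 (q, p) = -1) \<and> ((p, q) \<in> At - Y0 \<longrightarrow> x0 (p, q) = 0))"
    by (rule dir_pair[OF Y0sub x0int pq nY])
  have pqn: "p \<in> {1..n}" "q \<in> {1..n}" "p \<noteq> q" using pq AB_n AB_ne by blast+
  have ex1: "(p, q) \<in> E \<longleftrightarrow> (q, p) \<notin> E" if "(p, q) \<in> At \<union> B \<or> (q, p) \<in> At \<union> B"
  proof -
    have "(p, q) \<in> E \<or> (q, p) \<in> E"
      using that notY_present[of p q] notY_present[of q p] nY by blast
    moreover have "\<not> ((p, q) \<in> E \<and> (q, p) \<in> E)" using anti pqn by blast
    ultimately show ?thesis by blast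
  qed
  show ?thesis
  proof (cases "(p, q) \<in> A")
    case True
    consider "(p, q) \<in> At" "(q, p) \<notin> At" | "(q, p) \<in> At" "(p, q) \<notin> At" using At_pair True by blast
    then show ?thesis
    proof cases
      case 1
      have "x0 (p, q) = 0 \<longleftrightarrow> (q, p) \<notin> E" using 1 nY unfolding xx_def by auto
      then show ?thesis using dp 1 nY ex1 by auto
    next
      case 2
      have "x0 (q, p) = -1 \<longleftrightarrow> (p, q) \<in> E" using 2 nY unfolding xx_def by auto
      then show ?thesis using dp 2 nY by auto
    qed
  next
    case False
    then have B: "(p, q) \<in> B" using pq by blast
    then have "(p, q) \<notin> At" "(q, p) \<notin> At" using AtC BC by blast+
    moreover have "(p, q) \<in> E" using ex1 B F_Bpair by blast
    ultimately show ?thesis using dp by blast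
  qed
qed

lemma forward:
  "\<exists>Y x. Y \<subseteq> At \<union> B \<and> removable C A B ComCh NoComCh Y \<and>
          is_vertex (polyF_box C At Y) x \<and>
          (\<forall>a b c. a \<in> {1..n} \<and> b \<in> {1..n} \<and> c \<in> {1..n} \<and> a \<noteq> c \<and>
              admissible C A B Y a b c \<and> (a, c) \<notin> A \<union> B \<longrightarrow>
              wdot (At - Y) (weight a b c) x < wmax (At - Y) (weight a b c)) \<and>
          (\<forall>(a, c)\<in>Y. \<exists>b\<in>C. admissible C A B Y a b c \<and>
              wdot (At - Y) (weight a b c) x = wmax (At - Y) (weight a b c))"
proof (intro exI conjI)
  have finD: "finite (At - Y0)" using finAt by simp
  have box: "\<forall>e\<in>At - Y0. -1 \<le> x0 e \<and> x0 e \<le> 0" using x0int by force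
  show "Y0 \<subseteq> At \<union> B" by (rule Y0sub)
  have Ywit: "\<exists>b\<in>C. admissible C A B Y0 a b c \<and> (a, b) \<in> E \<and> (c, b) \<in> E" if ac: "(a, c) \<in> Y0" for a c
  proof -
    have acAB: "(a, c) \<in> At \<union> B" and nE: "(a, c) \<notin> E" "(c, a) \<notin> E" using ac unfolding YY_def by auto
    have acAB': "(a, c) \<in> A \<union> B" using acAB At_sub by blast
    have acn: "a \<in> {1..n}" "c \<in> {1..n}" "a \<noteq> c" using acAB' AB_n AB_ne by blast+
    have cC: "c \<in> C" using acAB' AB_C by blast
    have "p_adjacent E a c" using F_padj acn acAB' by blast
    then obtain b where cc: "(a, b) \<in> E" "(c, b) \<in> E" using nE unfolding p_adjacent_def common_child_def by blast
    have ab: "a \<noteq> b" using cc(2) nE(2) by blast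
    have cb: "c \<noteq> b" using cc(1) nE(1) by blast
    have bC: "b \<in> C" using F_head[OF cc(1) ab] .
    have "admissible C A B Y0 a b c"
      unfolding admissible_def using cC F_AB[OF cc(1) ab] F_AB[OF cc(2) cb] inE_notY[OF cc(1)] inE_notY[OF cc(2)] by blast
    then show ?thesis using bC cc by blast
  qed
  show "removable C A B ComCh NoComCh Y0"
    unfolding removable_def
  proof (intro conjI)
    show "\<forall>(a, c)\<in>ComCh. \<exists>b\<in>C. (a, b) \<in> B - Y0 \<and> (c, b) \<in> B - Y0"
    proof (intro ballI, clarify)
      fix a c assume ac: "(a, c) \<in> ComCh"
      then obtain b where b: "b \<in> C" "common_child E a c b" using sccr unfolding SCCR_def by blast
      have aC: "a \<notin> C" "c \<notin> C" using ac ComCh_sub by blast+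
      have E: "(a, b) \<in> E" "(c, b) \<in> E" using b unfolding common_child_def by auto
      have "a \<noteq> b" "c \<noteq> b" using aC b(1) by blast+
      then have "(a, b) \<in> A \<union> B" "(c, b) \<in> A \<union> B" using F_AB E by blast+
      then have "(a, b) \<in> B" "(c, b) \<in> B" using aC AC by blast+
      then show "\<exists>b\<in>C. (a, b) \<in> B - Y0 \<and> (c, b) \<in> B - Y0" using b(1) inE_notY E by blast
    qed
    show "\<forall>(a, c)\<in>NoComCh. \<not> (\<exists>b\<in>C. (a, b) \<in> B - Y0 \<and> (c, b) \<in> B - Y0)"
    proof (intro ballI, clarify)
      fix a c b assume ac: "(a, c) \<in> NoComCh" and bC: "b \<in> C" and h: "(a, b) \<in> B" "(a, b) \<notin> Y0" "(c, b) \<in> B" "(c, b) \<notin> Y0"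
      have "(a, b) \<in> E" using notY_present[of a b] h F_Bpair by blast
      moreover have "(c, b) \<in> E" using notY_present[of c b] h F_Bpair by blast
      ultimately have "common_child E a c b" unfolding common_child_def by blast
      then show False using sccr ac bC unfolding SCCR_def by blast
    qed
    show "\<forall>(a, c)\<in>Y0. \<exists>b\<in>C. (a, b) \<in> A \<union> B \<and> (c, b) \<in> A \<union> B \<and> Y0 \<inter> {(a, b), (b, a), (c, b), (b, c)} = {}"
      using Ywit unfolding admissible_def by blast
  qed
  have cut0: "1 \<le> outw (At - Y0) x0 U" if U: "U \<subseteq> C" "U \<noteq> {}" "U \<noteq> C" for U
  proof -
    obtain i j where ij: "i \<in> U" "j \<in> C" "j \<notin> U" using U by blast
    have "(i, j) \<in> E\<^sup>*" using F_strong ij U by blast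
    then have "\<exists>p q. (p, q) \<in> E \<and> p \<in> U \<and> q \<notin> U"
      using ij(1,3)
    proof (induction rule: rtrancl_induct)
      case base then show ?case by blast
    next
      case (step y z)
      then show ?case by blast
    qed
    then obtain p q where pq: "(p, q) \<in> E" "p \<in> U" "q \<notin> U" by blast
    have pq_ne: "p \<noteq> q" using pq by blast
    have pqAB: "(p, q) \<in> A \<union> B" using F_AB[OF pq(1) pq_ne] .
    have "(p, q) \<in> EE Y0 x0" using E_iff_EE[OF pqAB] inE_notY[OF pq(1)] pq(1) by blast
    then show ?thesis using arc_outw[OF Y0sub x0int] pq U by blast
  qed
  have x0P: "x0 \<in> polyF_box C At Y0"
    unfolding polyF_iff[OF finD] using box cut0 unfolding xx_def by auto
  show "is_vertex (polyF_box C At Y0) x0"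
  proof (rule integral_vertex[OF x0P])
    show "\<And>y e. y \<in> polyF_box C At Y0 \<Longrightarrow> e \<notin> At - Y0 \<Longrightarrow> y e = 0" using polyF_iff[OF finD] by blast
    show "\<And>y e. y \<in> polyF_box C At Y0 \<Longrightarrow> e \<in> At - Y0 \<Longrightarrow> -1 \<le> y e \<and> y e \<le> 0" using polyF_iff[OF finD] by blast
    show "\<And>e. e \<in> At - Y0 \<Longrightarrow> x0 e = -1 \<or> x0 e = 0" using x0int by blast
  qed
  show "\<forall>a b c. a \<in> {1..n} \<and> b \<in> {1..n} \<and> c \<in> {1..n} \<and> a \<noteq> c \<and>
              admissible C A B Y0 a b c \<and> (a, c) \<notin> A \<union> B \<longrightarrow>
              wdot (At - Y0) (weight a b c) x0 < wmax (At - Y0) (weight a b c)"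
  proof (intro allI impI)
    fix a b c
    assume h: "a \<in> {1..n} \<and> b \<in> {1..n} \<and> c \<in> {1..n} \<and> a \<noteq> c \<and> admissible C A B Y0 a b c \<and> (a, c) \<notin> A \<union> B"
    have adm: "admissible C A B Y0 a b c" and ac: "a \<noteq> c" and nac: "(a, c) \<notin> A \<union> B"
      and an: "a \<in> {1..n}" and cn: "c \<in> {1..n}" using h by blast+
    have le: "wdot (At - Y0) (weight a b c) x0 \<le> wmax (At - Y0) (weight a b c)"
      by (rule wdot_le_eq(1)[OF finD box])
    have "wdot (At - Y0) (weight a b c) x0 \<noteq> wmax (At - Y0) (weight a b c)"
    proof
      assume eq: "wdot (At - Y0) (weight a b c) x0 = wmax (At - Y0) (weight a b c)"
      then have EE: "(a, b) \<in> EE Y0 x0" "(c, b) \<in> EE Y0 x0" using w_equal_iff[OF Y0sub x0int adm ac] by blast+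
      have abAB: "(a, b) \<in> A \<union> B" and cbAB: "(c, b) \<in> A \<union> B" and cC: "c \<in> C"
        and nY: "(a, b) \<notin> Y0" "(b, a) \<notin> Y0" "(c, b) \<notin> Y0" "(b, c) \<notin> Y0"
        using adm unfolding admissible_def by auto
      have E: "(a, b) \<in> E" "(c, b) \<in> E" using E_iff_EE[OF abAB nY(1,2)] E_iff_EE[OF cbAB nY(3,4)] EE by blast+
      have bC: "b \<in> C" using cbAB AB_C by blast
      have "(b, c) \<in> E\<^sup>*" using F_strong[OF bC cC] .
      then have "p_adjacent E a c" using E ac unfolding p_adjacent_def common_child_def ancestor_def by blast
      then have "(a, c) \<in> A \<union> B \<or> (c, a) \<in> A \<union> B" using F_padj an cn ac by blast
      then show False using nac cC Asym BC by blast
    qed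
    then show "wdot (At - Y0) (weight a b c) x0 < wmax (At - Y0) (weight a b c)" using le by simp
  qed
  show "\<forall>(a, c)\<in>Y0. \<exists>b\<in>C. admissible C A B Y0 a b c \<and>
              wdot (At - Y0) (weight a b c) x0 = wmax (At - Y0) (weight a b c)"
  proof (intro ballI, clarify)
    fix a c assume ac: "(a, c) \<in> Y0"
    obtain b where b: "b \<in> C" "admissible C A B Y0 a b c" "(a, b) \<in> E" "(c, b) \<in> E" using Ywit[OF ac] by blast
    have acne: "a \<noteq> c" using ac Y0sub At_sub AB_ne by blast
    have abAB: "(a, b) \<in> A \<union> B" and cbAB: "(c, b) \<in> A \<union> B"
        and nY: "(a, b) \<notin> Y0" "(b, a) \<notin> Y0" "(c, b) \<notin> Y0" "(b, c) \<notin> Y0"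
        using b(2) unfolding admissible_def by auto
    have "(a, b) \<in> EE Y0 x0" "(c, b) \<in> EE Y0 x0"
      using E_iff_EE[OF abAB nY(1,2)] E_iff_EE[OF cbAB nY(3,4)] b(3,4) by blast+
    then have "wdot (At - Y0) (weight a b c) x0 = wmax (At - Y0) (weight a b c)"
      using w_equal_iff[OF Y0sub x0int b(2) acne] by blast
    then show "\<exists>b\<in>C. admissible C A B Y0 a b c \<and> wdot (At - Y0) (weight a b c) x0 = wmax (At - Y0) (weight a b c)"
      using b by blast
  qed
qed

end

end




theorem theorem4p16:
  fixes n :: nat and C :: "nat set" and A B ComCh NoComCh At :: "edge set"
  assumes C_sub: "C \<subseteq> {1..n}" and C_ne: "C \<noteq> {}"
    and A_sub: "A \<subseteq> C \<times> C" and A_sym: "\<forall>(a, b)\<in>A. (b, a) \<in> A"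
    and A_irrefl: "\<forall>a. (a, a) \<notin> A"
    and B_sub: "B \<subseteq> ({1..n} - C) \<times> C"
    and ComCh_sub: "ComCh \<subseteq> ({1..n} - C) \<times> ({1..n} - C)"
    and NoComCh_sub: "NoComCh \<subseteq> ({1..n} - C) \<times> ({1..n} - C)"
    and At_sub: "At \<subseteq> A"
    and At_one: "\<forall>(a, b)\<in>A. ((a, b) \<in> At \<longleftrightarrow> (b, a) \<notin> At)"
  shows
    "((\<exists>E. E \<subseteq> {1..n} \<times> {1..n} \<and> SCCR n C A B ComCh NoComCh E \<and>
          (\<forall>a\<in>{1..n}. \<forall>b\<in>{1..n}. a \<noteq> b \<longrightarrow> \<not> ((a, b) \<in> E \<and> (b, a) \<in> E)))
      \<longleftrightarrow>
      (\<exists>Y x. Y \<subseteq> At \<union> B \<and> removable C A B ComCh NoComCh Y \<and>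
          is_vertex (polyF_box C At Y) x \<and>
          (\<forall>a b c. a \<in> {1..n} \<and> b \<in> {1..n} \<and> c \<in> {1..n} \<and> a \<noteq> c \<and>
              admissible C A B Y a b c \<and> (a, c) \<notin> A \<union> B \<longrightarrow>
              wdot (At - Y) (weight a b c) x < wmax (At - Y) (weight a b c)) \<and>
          (\<forall>(a, c)\<in>Y. \<exists>b\<in>C. admissible C A B Y a b c \<and>
              wdot (At - Y) (weight a b c) x = wmax (At - Y) (weight a b c))))
    \<and>
    (\<forall>Y x. Y \<subseteq> At \<union> B \<and> removable C A B ComCh NoComCh Y \<and>
          is_vertex (polyF_box C At Y) x \<and>
          (\<forall>a b c. a \<in> {1..n} \<and> b \<in> {1..n} \<and> c \<in> {1..n} \<and> a \<noteq> c \<and>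
              admissible C A B Y a b c \<and> (a, c) \<notin> A \<union> B \<longrightarrow>
              wdot (At - Y) (weight a b c) x < wmax (At - Y) (weight a b c)) \<and>
          (\<forall>(a, c)\<in>Y. \<exists>b\<in>C. admissible C A B Y a b c \<and>
              wdot (At - Y) (weight a b c) x = wmax (At - Y) (weight a b c))
      \<longrightarrow> SCCR n C A B ComCh NoComCh (Etilde_YJ At B Y (Jx At Y x)))"
proof -
  have st: "setting n C A B ComCh NoComCh At" unfolding setting_def using assms by blast
  interpret setting n C A B ComCh NoComCh At by (rule st)
  have P2: "SCCR n C A B ComCh NoComCh (Etilde_YJ At B Y (Jx At Y x))"
    if Ysub: "Y \<subseteq> At \<union> B" and rem: "removable C A B ComCh NoComCh Y"
      and vx: "is_vertex (polyF_box C At Y) x"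
      and c1: "\<forall>a b c. a \<in> {1..n} \<and> b \<in> {1..n} \<and> c \<in> {1..n} \<and> a \<noteq> c \<and>
              admissible C A B Y a b c \<and> (a, c) \<notin> A \<union> B \<longrightarrow>
              wdot (At - Y) (weight a b c) x < wmax (At - Y) (weight a b c)"
      and c2: "\<forall>(a, c)\<in>Y. \<exists>b\<in>C. admissible C A B Y a b c \<and>
              wdot (At - Y) (weight a b c) x = wmax (At - Y) (weight a b c)"
    for Y x
  proof -
    have finD: "finite (At - Y)" using finAt by simp
    have xP: "x \<in> polyF_box C At Y" using vx unfolding is_vertex_def by blast
    have xz: "\<forall>e. e \<notin> At - Y \<longrightarrow> x e = 0"
      and cutc: "\<forall>U. U \<subseteq> C \<and> U \<noteq> {} \<and> U \<noteq> C \<longrightarrow> 1 \<le> outw (At - Y) x U"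
      and box: "\<forall>e\<in>At - Y. -1 \<le> x e \<and> x e \<le> 0"
      using xP unfolding polyF_iff[OF finD] by blast+
    have DC: "At - Y \<subseteq> C \<times> C" using AtC by blast
    interpret P: pctx C "At - Y" x by (rule pctx.intro[OF finC DC box cutc])
    have inP_iff: "P.inP y \<longleftrightarrow> y \<in> polyF_box C At Y" for y
      unfolding P.inP_def polyF_iff[OF finD] by blast
    have vert: "\<not> (\<exists>y z t. P.inP y \<and> P.inP z \<and> y \<noteq> z \<and> 0 < t \<and> t < 1 \<and> x = (\<lambda>e. t * y e + (1 - t) * z e))"
      using vx unfolding is_vertex_def inP_iff by blast
    have xint: "\<forall>e\<in>At - Y. x e = -1 \<or> x e = 0" using P.vertex_integral[OF xz vert] .
    show ?thesis by (rule part2_SCCR[OF Ysub xint cutc rem c1 c2])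
  qed
  show ?thesis
  proof (intro conjI)
    show "\<forall>Y x. Y \<subseteq> At \<union> B \<and> removable C A B ComCh NoComCh Y \<and>
          is_vertex (polyF_box C At Y) x \<and>
          (\<forall>a b c. a \<in> {1..n} \<and> b \<in> {1..n} \<and> c \<in> {1..n} \<and> a \<noteq> c \<and>
              admissible C A B Y a b c \<and> (a, c) \<notin> A \<union> B \<longrightarrow>
              wdot (At - Y) (weight a b c) x < wmax (At - Y) (weight a b c)) \<and>
          (\<forall>(a, c)\<in>Y. \<exists>b\<in>C. admissible C A B Y a b c \<and>
              wdot (At - Y) (weight a b c) x = wmax (At - Y) (weight a b c))
      \<longrightarrow> SCCR n C A B ComCh NoComCh (Etilde_YJ At B Y (Jx At Y x))"
      using P2 by blast
    show "(\<exists>E. E \<subseteq> {1..n} \<times> {1..n} \<and> SCCR n C A B ComCh NoComCh E \<and>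
          (\<forall>a\<in>{1..n}. \<forall>b\<in>{1..n}. a \<noteq> b \<longrightarrow> \<not> ((a, b) \<in> E \<and> (b, a) \<in> E)))
      \<longleftrightarrow>
      (\<exists>Y x. Y \<subseteq> At \<union> B \<and> removable C A B ComCh NoComCh Y \<and>
          is_vertex (polyF_box C At Y) x \<and>
          (\<forall>a b c. a \<in> {1..n} \<and> b \<in> {1..n} \<and> c \<in> {1..n} \<and> a \<noteq> c \<and>
              admissible C A B Y a b c \<and> (a, c) \<notin> A \<union> B \<longrightarrow>
              wdot (At - Y) (weight a b c) x < wmax (At - Y) (weight a b c)) \<and>
          (\<forall>(a, c)\<in>Y. \<exists>b\<in>C. admissible C A B Y a b c \<and>
              wdot (At - Y) (weight a b c) x = wmax (At - Y) (weight a b c)))"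
    proof
      assume "\<exists>E. E \<subseteq> {1..n} \<times> {1..n} \<and> SCCR n C A B ComCh NoComCh E \<and>
          (\<forall>a\<in>{1..n}. \<forall>b\<in>{1..n}. a \<noteq> b \<longrightarrow> \<not> ((a, b) \<in> E \<and> (b, a) \<in> E))"
      then obtain E where E: "E \<subseteq> {1..n} \<times> {1..n}" "SCCR n C A B ComCh NoComCh E"
          "\<forall>a\<in>{1..n}. \<forall>b\<in>{1..n}. a \<noteq> b \<longrightarrow> \<not> ((a, b) \<in> E \<and> (b, a) \<in> E)" by blast
      show "\<exists>Y x. Y \<subseteq> At \<union> B \<and> removable C A B ComCh NoComCh Y \<and>
          is_vertex (polyF_box C At Y) x \<and>
          (\<forall>a b c. a \<in> {1..n} \<and> b \<in> {1..n} \<and> c \<in> {1..n} \<and> a \<noteq> c \<and>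
              admissible C A B Y a b c \<and> (a, c) \<notin> A \<union> B \<longrightarrow>
              wdot (At - Y) (weight a b c) x < wmax (At - Y) (weight a b c)) \<and>
          (\<forall>(a, c)\<in>Y. \<exists>b\<in>C. admissible C A B Y a b c \<and>
              wdot (At - Y) (weight a b c) x = wmax (At - Y) (weight a b c))"
        by (rule forward[OF E])
    next
      assume "\<exists>Y x. Y \<subseteq> At \<union> B \<and> removable C A B ComCh NoComCh Y \<and>
          is_vertex (polyF_box C At Y) x \<and>
          (\<forall>a b c. a \<in> {1..n} \<and> b \<in> {1..n} \<and> c \<in> {1..n} \<and> a \<noteq> c \<and>
              admissible C A B Y a b c \<and> (a, c) \<notin> A \<union> B \<longrightarrow>
              wdot (At - Y) (weight a b c) x < wmax (At - Y) (weight a b c)) \<and>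
          (\<forall>(a, c)\<in>Y. \<exists>b\<in>C. admissible C A B Y a b c \<and>
              wdot (At - Y) (weight a b c) x = wmax (At - Y) (weight a b c))"
      then obtain Y x where Ysub: "Y \<subseteq> At \<union> B" and rem: "removable C A B ComCh NoComCh Y"
          and vx: "is_vertex (polyF_box C At Y) x"
          and c1: "\<forall>a b c. a \<in> {1..n} \<and> b \<in> {1..n} \<and> c \<in> {1..n} \<and> a \<noteq> c \<and>
              admissible C A B Y a b c \<and> (a, c) \<notin> A \<union> B \<longrightarrow>
              wdot (At - Y) (weight a b c) x < wmax (At - Y) (weight a b c)"
          and c2: "\<forall>(a, c)\<in>Y. \<exists>b\<in>C. admissible C A B Y a b c \<and>
              wdot (At - Y) (weight a b c) x = wmax (At - Y) (weight a b c)" by blast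
      have S: "SCCR n C A B ComCh NoComCh (Etilde_YJ At B Y (Jx At Y x))" by (rule P2[OF Ysub rem vx c1 c2])
      have xP: "x \<in> polyF_box C At Y" using vx unfolding is_vertex_def by blast
      have finD: "finite (At - Y)" using finAt by simp
      have box: "\<forall>e\<in>At - Y. -1 \<le> x e \<and> x e \<le> 0" using xP unfolding polyF_iff[OF finD] by blast
      have sub: "Etilde_YJ At B Y (Jx At Y x) \<subseteq> {1..n} \<times> {1..n}"
        unfolding Etilde_YJ_def Jx_def using At_sub A_sub B_sub C_sub Asym by blast
      have anti: "\<forall>a\<in>{1..n}. \<forall>b\<in>{1..n}. a \<noteq> b \<longrightarrow>
          \<not> ((a, b) \<in> Etilde_YJ At B Y (Jx At Y x) \<and> (b, a) \<in> Etilde_YJ At B Y (Jx At Y x))"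
        unfolding Etilde_YJ_def Jx_def using At_not_both AtC BC by blast
      show "\<exists>E. E \<subseteq> {1..n} \<times> {1..n} \<and> SCCR n C A B ComCh NoComCh E \<and>
          (\<forall>a\<in>{1..n}. \<forall>b\<in>{1..n}. a \<noteq> b \<longrightarrow> \<not> ((a, b) \<in> E \<and> (b, a) \<in> E))"
        using S sub anti by blast
    qed
  qed
qed


end
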